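(* Let $1\le \ell_1\le\dots\le\ell_r\le n$ and $T\in B(\varpi_{\ell_r})\otimes\cdots\otimes B(\varpi_{\ell_1})$. (a) If $T$ is not semistandard, then $\Psi_T=0$. (b) For every $\ell\in[n]$ with $\ell\ge \ell_r$, in $H$ one has $$\Psi_T\,X^{\varpi_\ell}=\sum_{C\in B(\varpi_\ell)}X^{C}\,\Psi_{C\otimes T}.$$ (c) For every $\lambda\in(\mathbb Z^n_{\ge0})_+$, $$\mathbf 1_0\,X^{\lambda}=\sum_{T\in B(\lambda)}X^{T}\,\Psi_T .$$
   Context: Fix $n\ge1$, $[n]=\{1,\dots,n\}$. $S_n$ is the symmetric group with simple transpositions $s_i=(i,i+1)$, $i\in[n-1]$, and length function $\ell(\cdot)$. $S_n$ acts on $\mathbb Z^n$ by permuting coordinates; $\varepsilon_1,\dots,\varepsilon_n$ is the standard basis, $(\cdot,\cdot)$ the bilinear form with $(\varepsilon_i,\varepsilon_j)=\delta_{ij}$, $\alpha_i=\varepsilon_i-\varepsilon_{i+1}$, and $\varpi_k=\varepsilon_1+\dots+\varepsilon_k$ for $k\in[n]$. $(\mathbb Z^n_{\ge0})_+=\{\lambda\in\mathbb Z^n_{\ge0}:\lambda_1\ge\dots\ge\lambda_n\}$. For $\lambda\in\mathbb Z^n$, $S_{n,\lambda}=\{w\in S_n:w\lambda=\lambda\}$. The affine Hecke algebra $H$ is the $\mathbb Z[t^{\pm1}]$-algebra with generators $T_1,\dots,T_{n-1},X_1^{\pm1},\dots,X_n^{\pm1}$ and relations $T_i^2=(t-1)T_i+t$,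 $T_iT_{i+1}T_i=T_{i+1}T_iT_{i+1}$, $T_iT_j=T_jT_i$ for $|i-j|>1$, $X_iX_j=X_jX_i$, $T_iX_iT_i=tX_{i+1}$, and $T_iX_j=X_jT_i$ for $j\notin\{i,i+1\}$ (so $T_i$ is invertible, $tT_i^{-1}=T_i+1-t$). For $w\in S_n$ with reduced expression $w=s_{i_1}\cdots s_{i_m}$, $T_w=T_{i_1}\cdots T_{i_m}$ (well defined). For $\mu\in\mathbb Z^n$, $X^\mu=X_1^{\mu_1}\cdots X_n^{\mu_n}$. $H_n$ is the subalgebra generated by $T_1,\dots,T_{n-1}$, with basis $\{T_w\}_{w\in S_n}$; for $\lambda\in\mathbb Z^n$, $H_{n,\lambda}$ is the $\mathbb Z[t^{\pm1}]$-span of $\{T_w:w\in S_{n,\lambda}\}$, $\mathbf 1_\lambda=\sum_{w\in S_{n,\lambda}}T_w$, and $\mathbf 1_0=\sum_{w\in S_n}T_w$. Columns: a column of length $\ell$ is $C=(c_1,\dots,c_\ell)$ with $1\le c_1<\dots<c_\ell\le n$ (identified with the subset $\{c_1,\dots,c_\ell\}$); $B(\varpi_\ell)$ is the set of these. If $[n]\setminus C=\{c^c_{\ell+1}<\dots<c^c_n\}$, $u_C\in S_n$ is the permutation with $u_C(k)=c_k$ for $k\le \ell$ and $u_C(k)=c^c_k$ for $k>\ell$. $X^C=X_{c_1}\cdots X_{c_\ell}$. The column $(1,\dots,\ell)$ is called highest weight. Tableaux: for $1\le\ell_1\le\dots\le\ell_r\le n$, $B(\varpi_{\ell_r})\otimes\cdots\otimes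 B(\varpi_{\ell_1})$ is the set of $T=C_r\otimes\cdots\otimes C_1$ with $C_i\in B(\varpi_{\ell_i})$, viewed as a filling of the Young diagram of $\lambda=\varpi_{\ell_r}+\dots+\varpi_{\ell_1}$ with columns $C_r,\dots,C_1$ from left to right (each written top to bottom). $T$ is semistandard if entries weakly increase along each row from left to right. Every $\lambda\in(\mathbb Z^n_{\ge0})_+$ is uniquely $\varpi_{\ell_r}+\dots+\varpi_{\ell_1}$ with $\ell_1\le\dots\le\ell_r$ (column lengths); $B(\lambda)\subseteq B(\varpi_{\ell_r})\otimes\cdots\otimes B(\varpi_{\ell_1})$ is the set of semistandard ones. $X^T=\prod_i X^{C_i}$. For $C\in B(\varpi_\ell)$ with $\ell\ge\ell_r$, $C\otimes T$ means $C\otimes C_r\otimes\cdots\otimes C_1$. Definition of $\Psi$: every $h\in H_n$ can be written uniquely as $h=\sum_{F\in B(\varpi_\ell)}T_{u_F}h_F$ with $h_F\in H_{n,\varpi_\ell}$. Define $\Psi_T\in H_n$ recursively: for a single column $C\in B(\varpi_\ell)$, $\Psi_C=t^{\ell(u_C)}(T_{u_C^{-1}})^{-1}\mathbf 1_{\varpi_\ell}$; for $T=C\otimes S$ with $C\in B(\varpi_\ell)$ and $S\in B(\varpi_{\ell_r})\otimes\cdots\otimes B(\varpi_{\ell_1})$, $\ell_r\le\ell$, write $\Psi_S=\sum_{E\in B(\varpi_\ell)}T_{u_E}h_{E,S}$ with $h_{E,S}\in H_{n,\varpi_\ell}$ and set $\Psi_T=t^{\ell(u_C)}(T_{u_C^{-1}})^{-1}h_{C,S}$.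 *)

theory Defs
  imports "HOL-Combinatorics.Permutations" "HOL-Computational_Algebra.Polynomial"
begin

definition perms :: "nat \<Rightarrow> (nat \<Rightarrow> nat) set" where
  "perms n = {w. w permutes {1..n}}"

definition sref :: "nat \<Rightarrow> nat \<Rightarrow> nat" where
  "sref i = Transposition.transpose i (Suc i)"

definition len :: "nat \<Rightarrow> (nat \<Rightarrow> nat) \<Rightarrow> nat" where
  "len n w = card {(i, j). i \<in> {1..n} \<and> j \<in> {1..n} \<and> i < j \<and> w j < w i}"

definition word_perm :: "nat list \<Rightarrow> nat \<Rightarrow> nat" where
  "word_perm is = foldr (\<lambda>i f. sref i \<circ> f) is id"

definition reduced_word :: "nat \<Rightarrow> (nat \<Rightarrow> nat) \<Rightarrow> nat list \<Rightarrow> bool" where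
  "reduced_word n w is \<longleftrightarrow> set is \<subseteq> {1..<n} \<and> word_perm is = w \<and> length is = len n w"

definition rword :: "nat \<Rightarrow> (nat \<Rightarrow> nat) \<Rightarrow> nat list" where
  "rword n w = (SOME is. reduced_word n w is)"

text \<open>Weights in Z^n as functions on {1..n}; S_n acts by permuting coordinates
  (w e_i = e_{w i}).\<close>
definition perm_act :: "(nat \<Rightarrow> nat) \<Rightarrow> (nat \<Rightarrow> int) \<Rightarrow> nat \<Rightarrow> int" where
  "perm_act w lam = (\<lambda>i. lam (inv w i))"

definition stab :: "nat \<Rightarrow> (nat \<Rightarrow> int) \<Rightarrow> (nat \<Rightarrow> nat) set" where
  "stab n lam = {w \<in> perms n. \<forall>i\<in>{1..n}. perm_act w lam i = lam i}"

definition varpi :: "nat \<Rightarrow> nat \<Rightarrow> int" where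
  "varpi k = (\<lambda>i. if i \<le> k then 1 else 0)"

definition dominant :: "nat \<Rightarrow> (nat \<Rightarrow> int) \<Rightarrow> bool" where
  "dominant n lam \<longleftrightarrow> (\<forall>i\<in>{1..n}. 0 \<le> lam i) \<and> (\<forall>i\<in>{1..<n}. lam (Suc i) \<le> lam i)"

definition cols :: "nat \<Rightarrow> nat \<Rightarrow> nat set set" where
  "cols n l = {C. C \<subseteq> {1..n} \<and> card C = l}"

text \<open>k-th entry (k \<ge> 1) of a column, read top to bottom.\<close>
definition entry :: "nat set \<Rightarrow> nat \<Rightarrow> nat" where
  "entry C k = sorted_list_of_set C ! (k - 1)"

definition ucol :: "nat \<Rightarrow> nat set \<Rightarrow> nat \<Rightarrow> nat" where
  "ucol n C = (\<lambda>k. if 1 \<le> k \<and> k \<le> card C then sorted_list_of_set C ! (k - 1)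
                  else if card C < k \<and> k \<le> n then sorted_list_of_set ({1..n} - C) ! (k - card C - 1)
                  else k)"

text \<open>A tableau C_r \<otimes> ... \<otimes> C_1 is the list [C_r, ..., C_1] (columns left to right),
  with 1 \<le> l_1 \<le> ... \<le> l_r \<le> n.\<close>
definition tableau :: "nat \<Rightarrow> nat set list \<Rightarrow> bool" where
  "tableau n Ts \<longleftrightarrow> Ts \<noteq> [] \<and> (\<forall>C\<in>set Ts. C \<subseteq> {1..n} \<and> 1 \<le> card C)
      \<and> sorted_wrt (\<lambda>A B. card B \<le> card A) Ts"

definition semistandard :: "nat set list \<Rightarrow> bool" where
  "semistandard Ts \<longleftrightarrow> (\<forall>j. Suc j < length Ts \<longrightarrow>
      (\<forall>k\<in>{1..card (Ts ! Suc j)}. entry (Ts ! j) k \<le> entry (Ts ! Suc j) k))"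

text \<open>B(lambda): semistandard tableaux of shape lambda; column j+1 (from the left)
  has length #{i. lambda_i \<ge> j+1}.\<close>
definition Btab :: "nat \<Rightarrow> (nat \<Rightarrow> int) \<Rightarrow> nat set list set" where
  "Btab n lam = {Ts. length Ts = nat (lam 1)
      \<and> (\<forall>j<length Ts. Ts ! j \<in> cols n (card {i\<in>{1..n}. int (Suc j) \<le> lam i}))
      \<and> semistandard Ts}"

text \<open>An element sum_w c_w T_w of H_n is its coefficient function. Coefficients are
  taken in Z[t] (all elements occurring here have polynomial coefficients).\<close>
type_synonym hn = "(nat \<Rightarrow> nat) \<Rightarrow> int poly"

text \<open>Left multiplication by T_i:  T_i T_w = T_{s_i w} if l(s_i w) > l(w),
  and = (t-1) T_w + t T_{s_i w} otherwise.\<close>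
definition lmulT :: "nat \<Rightarrow> nat \<Rightarrow> hn \<Rightarrow> hn" where
  "lmulT n i h = (\<lambda>w. if w \<notin> perms n then 0
      else if len n (sref i \<circ> w) < len n w then h (sref i \<circ> w) + [:-1, 1:] * h w
      else [:0, 1:] * h (sref i \<circ> w))"

text \<open>Left multiplication by t T_i^{-1} = T_i + 1 - t.\<close>
definition lmulTbar :: "nat \<Rightarrow> nat \<Rightarrow> hn \<Rightarrow> hn" where
  "lmulTbar n i h = (\<lambda>w. lmulT n i h w + [:1, -1:] * h w)"

definition lmulTw :: "nat \<Rightarrow> (nat \<Rightarrow> nat) \<Rightarrow> hn \<Rightarrow> hn" where
  "lmulTw n w h = foldr (lmulT n) (rword n w) h"

text \<open>Left multiplication by t^{l(u)} (T_{u^{-1}})^{-1}: if u = s_{j_1}...s_{j_m} is reduced,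
  then u^{-1} = s_{j_m}...s_{j_1} and t^m (T_{u^{-1}})^{-1} = (tT_{j_1}^{-1})...(tT_{j_m}^{-1}).\<close>
definition lmulTbarw :: "nat \<Rightarrow> (nat \<Rightarrow> nat) \<Rightarrow> hn \<Rightarrow> hn" where
  "lmulTbarw n u h = foldr (lmulTbar n) (rword n u) h"

definition one_stab :: "nat \<Rightarrow> (nat \<Rightarrow> int) \<Rightarrow> hn" where
  "one_stab n lam = (\<lambda>w. if w \<in> stab n lam then 1 else 0)"

definition one0 :: "nat \<Rightarrow> hn" where
  "one0 n = (\<lambda>w. if w \<in> perms n then 1 else 0)"

definition in_Hstab :: "nat \<Rightarrow> (nat \<Rightarrow> int) \<Rightarrow> hn \<Rightarrow> bool" where
  "in_Hstab n lam g \<longleftrightarrow> (\<forall>w. g w \<noteq> 0 \<longrightarrow> w \<in> stab n lam)"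

text \<open>The unique decomposition h = sum_F T_{u_F} h_F, h_F \<in> H_{n,varpi_l}.\<close>
definition decomp :: "nat \<Rightarrow> nat \<Rightarrow> hn \<Rightarrow> nat set \<Rightarrow> hn" where
  "decomp n l h = (THE hF. (\<forall>F. F \<notin> cols n l \<longrightarrow> hF F = (\<lambda>_. 0))
      \<and> (\<forall>F\<in>cols n l. in_Hstab n (varpi l) (hF F))
      \<and> h = (\<lambda>w. \<Sum>F\<in>cols n l. lmulTw n (ucol n F) (hF F) w))"

fun Psi :: "nat \<Rightarrow> nat set list \<Rightarrow> hn" where
  "Psi n [] = one0 n"
| "Psi n [C] = lmulTbarw n (ucol n C) (one_stab n (varpi (card C)))"
| "Psi n (C # D # S) = lmulTbarw n (ucol n C) (decomp n (card C) (Psi n (D # S)) C)"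

definition hecke_rels :: "nat \<Rightarrow> 'a::ring_1 \<Rightarrow> 'a \<Rightarrow> (nat \<Rightarrow> 'a) \<Rightarrow> (nat \<Rightarrow> 'a) \<Rightarrow> (nat \<Rightarrow> 'a) \<Rightarrow> bool" where
  "hecke_rels n t tinv T X Xinv \<longleftrightarrow>
     (\<forall>a. t * a = a * t) \<and> t * tinv = 1 \<and> tinv * t = 1
   \<and> (\<forall>i\<in>{1..<n}. T i * T i = (t - 1) * T i + t)
   \<and> (\<forall>i. 1 \<le> i \<and> Suc i < n \<longrightarrow> T i * T (Suc i) * T i = T (Suc i) * T i * T (Suc i))
   \<and> (\<forall>i\<in>{1..<n}. \<forall>j\<in>{1..<n}. (i + 1 < j \<or> j + 1 < i) \<longrightarrow> T i * T j = T j * T i)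
   \<and> (\<forall>i\<in>{1..n}. X i * Xinv i = 1 \<and> Xinv i * X i = 1)
   \<and> (\<forall>i\<in>{1..n}. \<forall>j\<in>{1..n}. X i * X j = X j * X i)
   \<and> (\<forall>i\<in>{1..<n}. T i * X i * T i = t * X (Suc i))
   \<and> (\<forall>i\<in>{1..<n}. \<forall>j\<in>{1..n}. j \<noteq> i \<and> j \<noteq> Suc i \<longrightarrow> T i * X j = X j * T i)"

definition evp :: "'a::ring_1 \<Rightarrow> int poly \<Rightarrow> 'a" where
  "evp t p = (\<Sum>k\<le>degree p. of_int (coeff p k) * t ^ k)"

definition Tw :: "nat \<Rightarrow> (nat \<Rightarrow> 'a::ring_1) \<Rightarrow> (nat \<Rightarrow> nat) \<Rightarrow> 'a" where
  "Tw n T w = prod_list (map T (rword n w))"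

text \<open>Image in H (or any algebra with the relations) of an element of H_n.\<close>
definition ev :: "nat \<Rightarrow> 'a::ring_1 \<Rightarrow> (nat \<Rightarrow> 'a) \<Rightarrow> hn \<Rightarrow> 'a" where
  "ev n t T h = (\<Sum>w\<in>perms n. evp t (h w) * Tw n T w)"

definition Xcol :: "(nat \<Rightarrow> 'a::ring_1) \<Rightarrow> nat set \<Rightarrow> 'a" where
  "Xcol X C = prod_list (map X (sorted_list_of_set C))"

definition Xtab :: "(nat \<Rightarrow> 'a::ring_1) \<Rightarrow> nat set list \<Rightarrow> 'a" where
  "Xtab X Ts = prod_list (map (Xcol X) Ts)"

text \<open>X^mu for mu with nonnegative entries.\<close>
definition Xpow :: "nat \<Rightarrow> (nat \<Rightarrow> 'a::ring_1) \<Rightarrow> (nat \<Rightarrow> int) \<Rightarrow> 'a" where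
  "Xpow n X mu = prod_list (map (\<lambda>i. X i ^ nat (mu i)) [1..<Suc n])"

end

theory Submission
  imports Defs
begin


definition Inv :: "nat \<Rightarrow> (nat \<Rightarrow> nat) \<Rightarrow> (nat \<times> nat) set" where
  "Inv n w = {(i, j). i \<in> {1..n} \<and> j \<in> {1..n} \<and> i < j \<and> w j < w i}"

lemma len_Inv: "len n w = card (Inv n w)"
  by (simp add: len_def Inv_def)

lemma finite_Inv[simp]: "finite (Inv n w)"
  by (rule finite_subset[of _ "{1..n} \<times> {1..n}"]) (auto simp: Inv_def)

lemma perm_eq_iff: "w permutes S \<Longrightarrow> (w x = w y) = (x = y)"
  by (meson permutes_inj injD)

lemma sref_perm: "i \<in> {1..<n} \<Longrightarrow> sref i permutes {1..n}"
  unfolding sref_def by (rule permutes_swap_id) auto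

lemma sref_comp_perm: "w \<in> perms n \<Longrightarrow> i \<in> {1..<n} \<Longrightarrow> sref i \<circ> w \<in> perms n"
  unfolding perms_def using sref_perm permutes_compose by blast

lemma sref_sref[simp]: "sref i \<circ> (sref i \<circ> w) = w"
  by (simp add: sref_def comp_assoc[symmetric])

lemma sref_app: "sref i x = (if x = i then Suc i else if x = Suc i then i else x)"
  by (simp add: sref_def transpose_def)

lemma Inv_step:
  assumes w: "w permutes {1..n}" and i: "i \<in> {1..<n}"
    and pq: "inv w i < inv w (Suc i)"
  shows "Inv n (sref i \<circ> w) = insert (inv w i, inv w (Suc i)) (Inv n w)"
    and "(inv w i, inv w (Suc i)) \<notin> Inv n w"
proof -
  define p where "p = inv w i"
  define q where "q = inv w (Suc i)"
  have wp: "w p = i" and wq: "w q = Suc i" using w unfolding p_def q_def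
    by (auto simp: permutes_inverses)
  have pn: "p \<in> {1..n}" "q \<in> {1..n}"
    using wp wq i w by (metis atLeastAtMost_iff atLeastLessThan_iff less_imp_le_nat
          permutes_not_in Suc_le_eq le_eq_less_or_eq not_less_eq_eq)+
  have ip: "\<And>x. w x = Suc (w p) \<Longrightarrow> x = q"
    using wp wq perm_eq_iff[OF w] by metis
  have pq': "p < q" using pq unfolding p_def q_def .
  have key: "(sref i (w b) < sref i (w a)) = (w b < w a \<or> (a = p \<and> b = q))" if "a < b" for a b
  proof -
    have Ha: "(w a = i) = (a = p)" "(w a = Suc i) = (a = q)" and Hb: "(w b = i) = (b = p)" "(w b = Suc i) = (b = q)"
      using perm_eq_iff[OF w] wp wq by metis+
    show ?thesis unfolding sref_app using Ha Hb that pq' by (auto split: if_splits)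
  qed
  show "Inv n (sref i \<circ> w) = insert (inv w i, inv w (Suc i)) (Inv n w)"
    unfolding p_def[symmetric] q_def[symmetric] Inv_def
    using pn pq' key by auto
  show "(inv w i, inv w (Suc i)) \<notin> Inv n w"
    unfolding p_def[symmetric] q_def[symmetric] Inv_def using wp wq by auto
qed

lemma perms_perm: "w \<in> perms n \<Longrightarrow> w permutes {1..n}"
  by (simp add: perms_def)

lemma inv_in: "w permutes {1..n} \<Longrightarrow> x \<in> {1..n} \<Longrightarrow> inv w x \<in> {1..n}"
  using permutes_inv permutes_in_image by fastforce

lemma inv_sref_comp:
  assumes w: "w permutes {1..n}" and i: "i \<in> {1..<n}"
  shows "inv (sref i \<circ> w) = inv w \<circ> sref i"
proof -
  have "bij (sref i)" unfolding sref_def by simp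
  moreover have "bij w" using w permutes_bij by blast
  ultimately have "inv (sref i \<circ> w) = inv w \<circ> inv (sref i)" by (simp add: o_inv_distrib)
  moreover have "inv (sref i) = sref i" unfolding sref_def by simp
  ultimately show ?thesis by simp
qed

lemma inv_neq:
  assumes w: "w permutes {1..n}" shows "inv w i \<noteq> inv w (Suc i)"
proof
  assume "inv w i = inv w (Suc i)"
  then have "w (inv w i) = w (inv w (Suc i))" by simp
  then show False using permutes_inverses(1)[OF assms] by simp
qed

lemma len_up:
  assumes w: "w \<in> perms n" and i: "i \<in> {1..<n}" and pq: "inv w i < inv w (Suc i)"
  shows "len n (sref i \<circ> w) = Suc (len n w)"
  using Inv_step[OF perms_perm[OF w] i pq] by (simp add: len_Inv)

lemma len_down:
  assumes w: "w \<in> perms n" and i: "i \<in> {1..<n}" and pq: "inv w (Suc i) < inv w i"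
  shows "len n w = Suc (len n (sref i \<circ> w))"
proof -
  let ?w = "sref i \<circ> w"
  have w': "?w \<in> perms n" using sref_comp_perm[OF w i] .
  have "inv ?w = inv w \<circ> sref i" by (rule inv_sref_comp[OF perms_perm[OF w] i])
  then have "inv ?w i < inv ?w (Suc i)" using pq by (simp add: sref_app)
  from len_up[OF w' i this] show ?thesis by simp
qed

lemma len_pm:
  assumes w: "w \<in> perms n" and i: "i \<in> {1..<n}"
  shows "len n (sref i \<circ> w) = Suc (len n w) \<or> len n w = Suc (len n (sref i \<circ> w))"
proof (cases "inv w i < inv w (Suc i)")
  case True then show ?thesis using len_up[OF w i] by simp
next
  case False
  then have "inv w (Suc i) < inv w i" using inv_neq[OF perms_perm[OF w], of i] by simp
  then show ?thesis using len_down[OF w i] by simp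
qed

lemma len_up_iff:
  assumes w: "w \<in> perms n" and i: "i \<in> {1..<n}"
  shows "len n w < len n (sref i \<circ> w) \<longleftrightarrow> inv w i < inv w (Suc i)"
proof (cases "inv w i < inv w (Suc i)")
  case True then show ?thesis using len_up[OF w i] by simp
next
  case False
  then have "inv w (Suc i) < inv w i" using inv_neq[OF perms_perm[OF w], of i] by simp
  then show ?thesis using len_down[OF w i] False by simp
qed

lemma word_perm_Nil[simp]: "word_perm [] = id"
  by (simp add: word_perm_def)

lemma word_perm_Cons[simp]: "word_perm (i # a) = sref i \<circ> word_perm a"
  by (simp add: word_perm_def)

lemma id_perms[simp]: "id \<in> perms n"
  by (simp add: perms_def permutes_id)

lemma len_id[simp]: "len n id = 0"
proof -
  have "Inv n id = {}" by (auto simp: Inv_def)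
  then show ?thesis by (simp add: len_Inv)
qed

lemma word_perm_perms: "set a \<subseteq> {1..<n} \<Longrightarrow> word_perm a \<in> perms n"
  by (induction a) (auto intro: sref_comp_perm)

lemma len_word_le: "set a \<subseteq> {1..<n} \<Longrightarrow> len n (word_perm a) \<le> length a"
proof (induction a)
  case Nil show ?case using len_id[of n] unfolding id_def by simp
next
  case (Cons i a)
  then have w: "word_perm a \<in> perms n" and i: "i \<in> {1..<n}" using word_perm_perms by auto
  have IH: "len n (word_perm a) \<le> length a" using Cons by auto
  have "len n (sref i \<circ> word_perm a) \<le> Suc (len n (word_perm a))" using len_pm[OF w i] by linarith
  then show ?case unfolding word_perm_Cons list.size using IH by linarith
qed

lemma reduced_Cons_up:
  assumes r: "reduced_word n w a" and i: "i \<in> {1..<n}"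
    and up: "len n (sref i \<circ> w) = Suc (len n w)"
  shows "reduced_word n (sref i \<circ> w) (i # a)"
  using r i up by (auto simp: reduced_word_def)

lemma reduced_Cons_down:
  assumes r: "reduced_word n w (i # a)"
  shows "reduced_word n (sref i \<circ> w) a" and "len n w = Suc (len n (sref i \<circ> w))"
proof -
  have a: "set a \<subseteq> {1..<n}" and i: "i \<in> {1..<n}" and wp: "w = sref i \<circ> word_perm a"
    and l: "length a + 1 = len n w"
    using r by (auto simp: reduced_word_def)
  have wa: "word_perm a = sref i \<circ> w" using wp by simp
  have w: "w \<in> perms n" using wp word_perm_perms[OF a] sref_comp_perm i by auto
  have le: "len n (sref i \<circ> w) \<le> length a" using len_word_le[OF a] wa by simp
  from len_pm[OF w i] le l show "len n w = Suc (len n (sref i \<circ> w))" by auto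
  with l a wa show "reduced_word n (sref i \<circ> w) a" by (auto simp: reduced_word_def)
qed

lemma reduced_perms: "reduced_word n w a \<Longrightarrow> w \<in> perms n"
  unfolding reduced_word_def using word_perm_perms by blast

lemma descent_lemma:
  fixes f :: "nat \<Rightarrow> nat"
  shows "v < u \<Longrightarrow> f u < f v \<Longrightarrow> \<exists>k. v \<le> k \<and> k < u \<and> f (Suc k) < f k"
proof (induction u)
  case 0 then show ?case by simp
next
  case (Suc u)
  show ?case
  proof (cases "f (Suc u) < f u")
    case True then show ?thesis using Suc by (intro exI[of _ u]) auto
  next
    case False
    then have "v < u" "f u < f v" using Suc by (auto simp: less_Suc_eq)
    then show ?thesis using Suc.IH by (meson less_SucI)
  qed
qed

lemma mono_ge:
  assumes m: "\<And>x y. x \<in> {1..n} \<Longrightarrow> y \<in> {1..n} \<Longrightarrow> x < y \<Longrightarrow> f x < f y"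
    and r: "\<And>x. x \<in> {1..n} \<Longrightarrow> f x \<in> {1..n}"
  shows "x \<in> {1..n} \<Longrightarrow> x \<le> (f x::nat)"
proof (induction x)
  case 0 thus ?case by simp
next
  case (Suc x)
  show ?case
  proof (cases x)
    case 0 thus ?thesis using r[OF Suc.prems] by simp
  next
    case (Suc y)
    have x: "x \<in> {1..n}" using Suc \<open>Suc x \<in> {1..n}\<close> by simp
    have "x \<le> f x" by (rule Suc.IH[OF x])
    moreover have "f x < f (Suc x)" by (rule m[OF x \<open>Suc x \<in> {1..n}\<close>]) simp
    ultimately show ?thesis by simp
  qed
qed

lemma Inv_empty_id:
  assumes w: "w \<in> perms n" and e: "Inv n w = {}"
  shows "w = id"
proof -
  have wp: "w permutes {1..n}" using w by (simp add: perms_def)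
  have mono: "w x < w y" if "x \<in> {1..n}" "y \<in> {1..n}" "x < y" for x y
  proof -
    have "(x, y) \<notin> Inv n w" using e by auto
    then have "\<not> w y < w x" using that by (auto simp: Inv_def)
    moreover have "w x \<noteq> w y" using that perm_eq_iff[OF wp] by auto
    ultimately show ?thesis by auto
  qed
  have rng: "w x \<in> {1..n}" if "x \<in> {1..n}" for x using that permutes_in_image[OF wp] by auto
  have ge: "x \<le> w x" if "x \<in> {1..n}" for x
    by (rule mono_ge[of n w, OF mono rng that])
  have le: "w (n - k) \<le> n - k" if "k < n" for k
    using that
  proof (induction k)
    case 0 then show ?case using rng[of n] by auto
  next
    case (Suc k)
    then have "w (n - Suc k) < w (n - k)" by (intro mono) auto
    then show ?case using Suc by auto
  qed
  have "w x = x" for x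
  proof (cases "x \<in> {1..n}")
    case True
    have e: "n - (n - x) = x" using True by auto
    have "n - x < n" using True by auto
    from le[OF this] have "w x \<le> x" unfolding e .
    then show ?thesis using ge[OF True] by (rule antisym)
  next
    case False then show ?thesis by (rule permutes_not_in[OF wp])
  qed
  then show ?thesis by (intro ext) simp
qed

lemma descent_exists:
  assumes w: "w \<in> perms n" and e: "Inv n w \<noteq> {}"
  shows "\<exists>i\<in>{1..<n}. inv w (Suc i) < inv w i"
proof -
  have wp: "w permutes {1..n}" using w by (simp add: perms_def)
  obtain a b where ab: "a \<in> {1..n}" "b \<in> {1..n}" "a < b" "w b < w a" using e by (auto simp: Inv_def)
  have rng: "w x \<in> {1..n}" if "x \<in> {1..n}" for x using that permutes_in_image[OF wp] by auto
  have "inv w (w a) < inv w (w b)" using ab wp by (simp add: permutes_inverses)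
  from descent_lemma[of "w b" "w a" "inv w", OF ab(4) this] obtain k where
    k: "w b \<le> k" "k < w a" "inv w (Suc k) < inv w k" by auto
  have "k \<in> {1..<n}" using k rng[OF ab(1)] rng[OF ab(2)] by auto
  then show ?thesis using k by auto
qed

lemma reduced_exists: "w \<in> perms n \<Longrightarrow> \<exists>a. reduced_word n w a"
proof (induction "len n w" arbitrary: w)
  case 0
  then have "w = id" using Inv_empty_id by (simp add: len_Inv)
  then have "reduced_word n w []" unfolding reduced_word_def by (simp only: word_perm_Nil len_id) simp
  then show ?case by blast
next
  case (Suc m)
  then have "Inv n w \<noteq> {}" by (auto simp: len_Inv)
  from descent_exists[OF Suc.prems this] obtain i where i: "i \<in> {1..<n}" "inv w (Suc i) < inv w i" by auto
  have l: "len n w = Suc (len n (sref i \<circ> w))" by (rule len_down[OF Suc.prems i])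
  have "sref i \<circ> w \<in> perms n" using sref_comp_perm[OF Suc.prems i(1)] .
  with Suc.hyps(1)[of "sref i \<circ> w"] Suc.hyps(2) l obtain a where "reduced_word n (sref i \<circ> w) a" by auto
  then have "reduced_word n w (i # a)" using i l by (auto simp: reduced_word_def)
  then show ?case by blast
qed

lemma rword_reduced: "w \<in> perms n \<Longrightarrow> reduced_word n w (rword n w)"
  unfolding rword_def using reduced_exists someI_ex by fast


lemma sref_comm: "Suc i < j \<or> Suc j < i \<Longrightarrow> sref i \<circ> sref j = sref j \<circ> sref i"
  by (rule ext) (auto simp: sref_app)

lemma sref_braid: "sref i \<circ> sref (Suc i) \<circ> sref i = sref (Suc i) \<circ> sref i \<circ> sref (Suc i)"
  by (rule ext) (auto simp: sref_app)

lemma reduced_len: "reduced_word n w a \<Longrightarrow> length a = len n w"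
  by (simp add: reduced_word_def)

lemma reduced_set: "reduced_word n w a \<Longrightarrow> set a \<subseteq> {1..<n}"
  by (simp add: reduced_word_def)

lemma descent_of_reduced:
  assumes r: "reduced_word n w (i # a)"
  shows "inv w (Suc i) < inv w i"
proof -
  have w: "w \<in> perms n" using reduced_perms[OF r] .
  have i: "i \<in> {1..<n}" using reduced_set[OF r] by auto
  have "len n (sref i \<circ> w) < len n w" using reduced_Cons_down(2)[OF r] by simp
  then have "\<not> inv w i < inv w (Suc i)" using len_up_iff[OF w i] by simp
  then show ?thesis using inv_neq[OF perms_perm[OF w], of i] by simp
qed

lemma inv_sref_comp_app:
  assumes "w \<in> perms n" "i \<in> {1..<n}"
  shows "inv (sref i \<circ> w) x = inv w (sref i x)"
  using inv_sref_comp[OF perms_perm[OF assms(1)] assms(2)] by simp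

lemma up_of_descent:
  assumes w: "w \<in> perms n" and i: "i \<in> {1..<n}" and d: "inv w (Suc i) < inv w i"
  shows "\<exists>c. reduced_word n (sref i \<circ> w) c \<and> reduced_word n w (i # c)
             \<and> len n w = Suc (len n (sref i \<circ> w))"
proof -
  have l: "len n w = Suc (len n (sref i \<circ> w))" by (rule len_down[OF w i d])
  have w': "sref i \<circ> w \<in> perms n" by (rule sref_comp_perm[OF w i])
  obtain c where c: "reduced_word n (sref i \<circ> w) c" using reduced_exists[OF w'] by blast
  have "reduced_word n (sref i \<circ> (sref i \<circ> w)) (i # c)"
    by (rule reduced_Cons_up[OF c i]) (simp add: l)
  then show ?thesis using c l by auto
qed

context
  fixes n :: nat and t tinv :: "'a::ring_1" and T X Xinv :: "nat \<Rightarrow> 'a"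
  assumes H: "hecke_rels n t tinv T X Xinv"
begin

lemma far_case:
  assumes IH: "\<And>w a b. length a < m \<Longrightarrow> reduced_word n w a \<Longrightarrow> reduced_word n w b
                 \<Longrightarrow> prod_list (map T a) = prod_list (map T b)"
    and ra: "reduced_word n w (i # a)" and rb: "reduced_word n w (j # b)"
    and m: "m = length (i # a)"
    and far: "Suc i < j \<or> Suc j < i"
  shows "prod_list (map T (i # a)) = prod_list (map T (j # b))"
proof -
  have w: "w \<in> perms n" using reduced_perms[OF ra] .
  have i: "i \<in> {1..<n}" using reduced_set[OF ra] by auto
  have j: "j \<in> {1..<n}" using reduced_set[OF rb] by auto
  have di: "inv w (Suc i) < inv w i" by (rule descent_of_reduced[OF ra])
  have dj: "inv w (Suc j) < inv w j" by (rule descent_of_reduced[OF rb])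
  have ra': "reduced_word n (sref i \<circ> w) a" using reduced_Cons_down(1)[OF ra] .
  have rb': "reduced_word n (sref j \<circ> w) b" using reduced_Cons_down(1)[OF rb] .
  have wi: "sref i \<circ> w \<in> perms n" using sref_comp_perm[OF w i] .
  have wj: "sref j \<circ> w \<in> perms n" using sref_comp_perm[OF w j] .
  have dij: "inv (sref i \<circ> w) (Suc j) < inv (sref i \<circ> w) j"
    using dj far by (auto simp: inv_sref_comp_app[OF w i] sref_app)
  obtain c where c: "reduced_word n (sref j \<circ> (sref i \<circ> w)) c"
    and c1: "reduced_word n (sref i \<circ> w) (j # c)"
    using up_of_descent[OF wi j dij] by blast
  have dji: "inv (sref j \<circ> w) (Suc i) < inv (sref j \<circ> w) i"
    using di far by (auto simp: inv_sref_comp_app[OF w j] sref_app)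
  have e: "sref j \<circ> (sref i \<circ> w) = sref i \<circ> (sref j \<circ> w)"
    using sref_comm[OF far] by (metis comp_assoc)
  have lw: "length a < m" "length b < m" using m reduced_len[OF ra] reduced_len[OF rb] by auto
  obtain c' where c2: "reduced_word n (sref j \<circ> w) (i # c')"
    and c': "reduced_word n (sref i \<circ> (sref j \<circ> w)) c'"
    using up_of_descent[OF wj i dji] by blast
  have c'': "reduced_word n (sref i \<circ> (sref j \<circ> w)) c" using c e by simp
  have "length c' < m" using reduced_len[OF c'] reduced_len[OF c''] reduced_len[OF c1] reduced_len[OF ra'] lw by simp
  then have cc: "prod_list (map T c') = prod_list (map T c)" using IH c' c'' by blast
  have "prod_list (map T a) = T j * prod_list (map T c)" using IH[OF lw(1) ra' c1] by simp
  moreover have "prod_list (map T b) = T i * prod_list (map T c)" using IH[OF lw(2) rb' c2] cc by simp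
  moreover have "T i * T j = T j * T i"
    using H i j far unfolding hecke_rels_def by auto
  ultimately show ?thesis by (simp add: mult.assoc[symmetric])
qed

lemma adj_case:
  assumes IH: "\<And>w a b. length a < m \<Longrightarrow> reduced_word n w a \<Longrightarrow> reduced_word n w b
                 \<Longrightarrow> prod_list (map T a) = prod_list (map T b)"
    and ra: "reduced_word n w (i # a)" and rb: "reduced_word n w (Suc i # b)"
    and m: "m = length (i # a)"
  shows "prod_list (map T (i # a)) = prod_list (map T (Suc i # b))"
proof -
  let ?j = "Suc i"
  have w: "w \<in> perms n" using reduced_perms[OF ra] .
  have i: "i \<in> {1..<n}" using reduced_set[OF ra] by auto
  have j: "?j \<in> {1..<n}" using reduced_set[OF rb] by auto
  have di: "inv w (Suc i) < inv w i" by (rule descent_of_reduced[OF ra])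
  have dj: "inv w (Suc ?j) < inv w ?j" by (rule descent_of_reduced[OF rb])
  have ra': "reduced_word n (sref i \<circ> w) a" using reduced_Cons_down(1)[OF ra] .
  have rb': "reduced_word n (sref ?j \<circ> w) b" using reduced_Cons_down(1)[OF rb] .
  have la: "length a = len n (sref i \<circ> w)" using reduced_len[OF ra'] .
  have lb: "length b = len n (sref ?j \<circ> w)" using reduced_len[OF rb'] .
  have lw: "len n w = Suc (length a)" "len n w = Suc (length b)"
    using reduced_Cons_down(2)[OF ra] reduced_Cons_down(2)[OF rb] la lb by auto
  have wi: "sref i \<circ> w \<in> perms n" using sref_comp_perm[OF w i] .
  define w2 where "w2 = sref ?j \<circ> (sref i \<circ> w)"
  have d1: "inv (sref i \<circ> w) (Suc ?j) < inv (sref i \<circ> w) ?j"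
    using di dj by (auto simp: inv_sref_comp_app[OF w i] sref_app)
  obtain c2 where c2: "reduced_word n w2 c2" and l1: "len n (sref i \<circ> w) = Suc (len n w2)"
    using up_of_descent[OF wi j d1] unfolding w2_def by blast
  have w2p: "w2 \<in> perms n" using reduced_perms[OF c2] .
  have d2: "inv w2 (Suc i) < inv w2 i"
    using di dj unfolding w2_def
    by (auto simp: inv_sref_comp_app[OF wi j] inv_sref_comp_app[OF w i] sref_app)
  define w3 where "w3 = sref i \<circ> w2"
  obtain c where c: "reduced_word n w3 c" and l2: "len n w2 = Suc (len n w3)"
    using up_of_descent[OF w2p i d2] unfolding w3_def by blast
  have w3p: "w3 \<in> perms n" using reduced_perms[OF c] .
  have r1: "reduced_word n w2 (i # c)"
    using reduced_Cons_up[OF c i] l2 unfolding w3_def by simp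
  have r2: "reduced_word n (sref i \<circ> w) (?j # i # c)"
    using reduced_Cons_up[OF r1 j] l1 unfolding w2_def by simp
  have br: "sref i \<circ> (sref ?j \<circ> w3) = sref ?j \<circ> w"
  proof -
    have "sref i \<circ> (sref ?j \<circ> w3) = (sref i \<circ> sref ?j \<circ> sref i) \<circ> (sref ?j \<circ> (sref i \<circ> w))"
      unfolding w3_def w2_def by (simp add: comp_assoc)
    also have "\<dots> = (sref ?j \<circ> sref i \<circ> sref ?j) \<circ> (sref ?j \<circ> (sref i \<circ> w))"
      by (simp only: sref_braid)
    also have "\<dots> = sref ?j \<circ> w"
      by (simp add: comp_assoc)
    finally show ?thesis .
  qed
  have w3j: "sref ?j \<circ> w3 \<in> perms n" using sref_comp_perm[OF w3p j] .
  have ljw: "len n (sref ?j \<circ> w) = Suc (Suc (len n w3))"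
    using lw la lb l1 l2 by simp
  have p1: "len n (sref ?j \<circ> w3) \<le> Suc (len n w3)" using len_pm[OF w3p j] by linarith
  have p2: "len n (sref i \<circ> (sref ?j \<circ> w3)) \<le> Suc (len n (sref ?j \<circ> w3))"
    using len_pm[OF w3j i] by linarith
  have l3: "len n (sref ?j \<circ> w3) = Suc (len n w3)" using p1 p2 ljw br by simp
  have r3: "reduced_word n (sref ?j \<circ> w3) (?j # c)" using reduced_Cons_up[OF c j l3] .
  have l4: "len n (sref i \<circ> (sref ?j \<circ> w3)) = Suc (len n (sref ?j \<circ> w3))"
    using l3 ljw br by simp
  have r4: "reduced_word n (sref ?j \<circ> w) (i # ?j # c)"
    using reduced_Cons_up[OF r3 i l4] br by simp
  have lt: "length a < m" "length b < m" using m lw by auto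
  have "prod_list (map T a) = T ?j * (T i * prod_list (map T c))" using IH[OF lt(1) ra' r2] by simp
  moreover have "prod_list (map T b) = T i * (T ?j * prod_list (map T c))" using IH[OF lt(2) rb' r4] by simp
  moreover have "T i * T ?j * T i = T ?j * T i * T ?j"
    using H i j unfolding hecke_rels_def by auto
  ultimately show ?thesis by (simp add: mult.assoc[symmetric])
qed

lemma matsumoto:
  "reduced_word n w a \<Longrightarrow> reduced_word n w b \<Longrightarrow> prod_list (map T a) = prod_list (map T b)"
proof (induction "length a" arbitrary: w a b rule: less_induct)
  case less
  show ?case
  proof (cases a)
    case Nil
    then have "len n w = 0" using reduced_len[OF less.prems(1)] by simp
    then have "b = []" using reduced_len[OF less.prems(2)] by simp
    then show ?thesis using Nil by simp
  next
    case (Cons i a')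
    then obtain j b' where b: "b = j # b'"
      using reduced_len[OF less.prems(1)] reduced_len[OF less.prems(2)] by (cases b) auto
    have IH: "\<And>w a2 b2. length a2 < length a \<Longrightarrow> reduced_word n w a2 \<Longrightarrow> reduced_word n w b2
                 \<Longrightarrow> prod_list (map T a2) = prod_list (map T b2)"
      using less.hyps by blast
    have ra: "reduced_word n w (i # a')" using less.prems(1) Cons by simp
    have rb: "reduced_word n w (j # b')" using less.prems(2) b by simp
    consider "i = j" | "Suc i < j \<or> Suc j < i" | "j = Suc i" | "i = Suc j" by linarith
    then show ?thesis
    proof cases
      case 1
      have "length a' < length a" using Cons by simp
      from IH[OF this reduced_Cons_down(1)[OF ra] reduced_Cons_down(1)[OF rb[folded 1]]]
      show ?thesis using Cons b 1 by simp
    next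
      case 2
      show ?thesis using far_case[OF IH ra rb _ 2] Cons b by simp
    next
      case 3
      show ?thesis using adj_case[OF IH ra rb[unfolded 3]] Cons b 3 by simp
    next
      case 4
      have lab: "length a = length b" by (simp add: reduced_len[OF less.prems(1)] reduced_len[OF less.prems(2)])
      show ?thesis using adj_case[OF IH[unfolded lab] rb ra[unfolded 4]] Cons b 4 by simp
    qed
  qed
qed

lemma Tw_up:
  assumes w: "w \<in> perms n" and i: "i \<in> {1..<n}" and up: "len n (sref i \<circ> w) = Suc (len n w)"
  shows "Tw n T (sref i \<circ> w) = T i * Tw n T w"
proof -
  have r: "reduced_word n (sref i \<circ> w) (i # rword n w)"
    by (rule reduced_Cons_up[OF rword_reduced[OF w] i up])
  have r2: "reduced_word n (sref i \<circ> w) (rword n (sref i \<circ> w))"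
    by (rule rword_reduced[OF sref_comp_perm[OF w i]])
  show ?thesis unfolding Tw_def using matsumoto[OF r2 r] by simp
qed

lemma Tw_id: "Tw n T id = 1"
proof -
  have "reduced_word n id (rword n id)" by (rule rword_reduced) simp
  then have "rword n id = []" using reduced_len by fastforce
  then show ?thesis by (simp add: Tw_def)
qed

end


lemma central_pow: "(\<forall>a. t * a = a * (t::'a::ring_1)) \<Longrightarrow> t ^ k * x = x * t ^ k"
proof (induction k)
  case 0 then show ?case by simp
next
  case (Suc k)
  have "t ^ Suc k * x = t * (t ^ k * x)" by (simp add: mult.assoc)
  also have "\<dots> = t * (x * t ^ k)" using Suc by simp
  also have "\<dots> = (t * x) * t ^ k" by (simp only: mult.assoc)
  also have "\<dots> = (x * t) * t ^ k" using Suc.prems by simp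
  also have "\<dots> = x * t ^ Suc k" by (simp only: mult.assoc power_Suc)
  finally show ?case .
qed

lemma evp_upto:
  assumes "degree p \<le> N"
  shows "evp t p = (\<Sum>k\<le>N. of_int (coeff p k) * t ^ k)"
proof -
  have "(\<Sum>k\<le>N. of_int (coeff p k) * t ^ k) = (\<Sum>k\<le>degree p. of_int (coeff p k) * t ^ k)"
    using assms by (intro sum.mono_neutral_right) (auto simp: coeff_eq_0)
  then show ?thesis by (simp add: evp_def)
qed

lemma evp_add: "evp t (p + q) = evp t p + evp t q"
proof -
  let ?N = "max (degree p) (degree q)"
  have "evp t (p + q) = (\<Sum>k\<le>?N. of_int (coeff (p + q) k) * t ^ k)"
    by (rule evp_upto) (meson degree_add_le max.cobounded1 max.cobounded2)
  also have "\<dots> = (\<Sum>k\<le>?N. of_int (coeff p k) * t ^ k) + (\<Sum>k\<le>?N. of_int (coeff q k) * t ^ k)"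
    by (simp add: distrib_right sum.distrib)
  also have "\<dots> = evp t p + evp t q"
    by (simp add: evp_upto[symmetric])
  finally show ?thesis .
qed

lemma evp_0[simp]: "evp t 0 = 0"
  by (simp add: evp_def)

lemma evp_1[simp]: "evp t 1 = 1"
  by (simp add: evp_def)

lemma evp_sum: "evp t (\<Sum>x\<in>A. f x) = (\<Sum>x\<in>A. evp t (f x))"
  by (induction A rule: infinite_finite_induct) (auto simp: evp_add)

lemma evp_smult: "evp t (smult a p) = of_int a * evp t p"
proof -
  have "evp t (smult a p) = (\<Sum>k\<le>degree p. of_int (coeff (smult a p) k) * t ^ k)"
    by (rule evp_upto) (rule degree_smult_le)
  also have "\<dots> = of_int a * evp t p"
    by (simp add: evp_def sum_distrib_left mult.assoc)
  finally show ?thesis .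
qed

lemma evp_pCons0:
  assumes tc: "\<forall>a. t * a = a * t"
  shows "evp t (pCons 0 p) = t * evp t p"
proof -
  have "evp t (pCons 0 p) = (\<Sum>k\<le>Suc (degree p). of_int (coeff (pCons 0 p) k) * t ^ k)"
    by (rule evp_upto) (simp add: degree_pCons_le)
  also have "\<dots> = (\<Sum>k\<le>degree p. of_int (coeff p k) * t ^ Suc k)"
    by (subst sum.atMost_Suc_shift) simp
  also have "\<dots> = t * evp t p"
    unfolding evp_def sum_distrib_left
  proof (rule sum.cong[OF refl])
    fix k
    have "t * (of_int (coeff p k) * t ^ k) = of_int (coeff p k) * t * t ^ k"
      using tc by (simp add: mult.assoc[symmetric])
    then show "of_int (coeff p k) * t ^ Suc k = t * (of_int (coeff p k) * t ^ k)"
      by (simp add: mult.assoc)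
  qed
  finally show ?thesis .
qed

lemma evp_lin:
  assumes tc: "\<forall>a. t * a = a * t"
  shows "evp t ([:a, b:] * p) = (of_int a + of_int b * t) * evp t p"
proof -
  have "[:a, b:] * p = smult a p + pCons 0 (smult b p)"
    by (simp add: mult_pCons_left)
  then have "evp t ([:a, b:] * p) = of_int a * evp t p + t * (of_int b * evp t p)"
    by (simp add: evp_add evp_smult evp_pCons0[OF tc])
  also have "\<dots> = (of_int a + of_int b * t) * evp t p"
    using tc by (simp add: distrib_right mult.assoc[symmetric])
  finally show ?thesis .
qed

lemma evp_central:
  assumes tc: "\<forall>a. t * a = a * t"
  shows "evp t p * x = x * evp t p"
  unfolding evp_def sum_distrib_left sum_distrib_right
proof (rule sum.cong[OF refl])
  fix k
  have "of_int (coeff p k) * t ^ k * x = of_int (coeff p k) * (x * t ^ k)"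
    using central_pow[OF tc] by (simp add: mult.assoc)
  also have "\<dots> = (of_int (coeff p k) * x) * t ^ k" by (simp only: mult.assoc)
  also have "\<dots> = (x * of_int (coeff p k)) * t ^ k" by (simp only: mult_of_int_commute)
  also have "\<dots> = x * (of_int (coeff p k) * t ^ k)" by (simp only: mult.assoc)
  finally show "of_int (coeff p k) * t ^ k * x = x * (of_int (coeff p k) * t ^ k)" .
qed

lemma ev_add: "ev n t T (\<lambda>w. f w + g w) = ev n t T f + ev n t T g"
  by (simp add: ev_def evp_add distrib_right sum.distrib)

lemma ev_zero[simp]: "ev n t T (\<lambda>w. 0) = 0"
  by (simp add: ev_def)

lemma ev_sum: "ev n t T (\<lambda>w. \<Sum>x\<in>A. f x w) = (\<Sum>x\<in>A. ev n t T (f x))"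
  unfolding ev_def evp_sum sum_distrib_right by (rule sum.swap)

lemma ev_lin:
  assumes tc: "\<forall>a. t * a = a * t"
  shows "ev n t T (\<lambda>w. [:a, b:] * h w) = (of_int a + of_int b * t) * ev n t T h"
  unfolding ev_def sum_distrib_left by (rule sum.cong[OF refl]) (simp only: evp_lin[OF tc] mult.assoc)

lemma finite_perms[simp]: "finite (perms n)"
  unfolding perms_def by (rule finite_permutations) simp

context
  fixes n :: nat and t tinv :: "'a::ring_1" and T X Xinv :: "nat \<Rightarrow> 'a"
  assumes H: "hecke_rels n t tinv T X Xinv"
begin

lemma tc: "\<forall>a. t * a = a * t"
  using H by (simp add: hecke_rels_def)

lemma ev_lmulT:
  assumes i: "i \<in> {1..<n}"
  shows "ev n t T (lmulT n i h) = T i * ev n t T h"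
proof -
  define S where "S = (\<lambda>w::nat\<Rightarrow>nat. sref i \<circ> w)"
  define D where "D = {w \<in> perms n. len n (S w) < len n w}"
  define U where "U = {w \<in> perms n. \<not> len n (S w) < len n w}"
  have fD: "finite D" and fU: "finite U" by (auto simp: D_def U_def)
  have PDU: "perms n = D \<union> U" and DUe: "D \<inter> U = {}" by (auto simp: D_def U_def)
  have SS: "S (S w) = w" for w by (simp add: S_def)
  have DU: "S v \<in> U" if "v \<in> D" for v
    using that sref_comp_perm[OF _ i] by (auto simp: D_def U_def S_def)
  have Uup: "len n (S v) = Suc (len n v)" if "v \<in> U" for v
    using that len_pm[OF _ i, of v] by (auto simp: U_def S_def)
  have UD: "S v \<in> D" if "v \<in> U" for v
    using that sref_comp_perm[OF _ i] Uup[OF that] by (auto simp: D_def U_def S_def)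
  have reU: "(\<Sum>w\<in>U. F w) = (\<Sum>v\<in>D. F (S v))" for F :: "(nat \<Rightarrow> nat) \<Rightarrow> 'a"
    by (rule sum.reindex_bij_witness[of _ S S]) (auto simp: SS DU UD)
  have reD: "(\<Sum>w\<in>D. F w) = (\<Sum>v\<in>U. F (S v))" for F :: "(nat \<Rightarrow> nat) \<Rightarrow> 'a"
    by (rule sum.reindex_bij_witness[of _ S S]) (auto simp: SS DU UD)
  have TU: "T i * Tw n T w = Tw n T (S w)" if "w \<in> U" for w
    using Tw_up[OF H _ i Uup[OF that, unfolded S_def]] that by (simp add: U_def S_def)
  have TD: "T i * Tw n T w = (t - 1) * Tw n T w + t * Tw n T (S w)" if "w \<in> D" for w
  proof -
    have e: "Tw n T w = T i * Tw n T (S w)" using TU[OF DU[OF that]] SS by simp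
    have q: "T i * T i = (t - 1) * T i + t" using H i by (simp add: hecke_rels_def)
    have "T i * Tw n T w = (T i * T i) * Tw n T (S w)" using e by (simp add: mult.assoc)
    also have "\<dots> = (t - 1) * (T i * Tw n T (S w)) + t * Tw n T (S w)"
      unfolding q by (simp add: distrib_right mult.assoc)
    finally show ?thesis using e by simp
  qed
  have L: "ev n t T (lmulT n i h) = (\<Sum>w\<in>D. evp t (h (S w)) * Tw n T w)
      + (\<Sum>w\<in>D. (t - 1) * (evp t (h w) * Tw n T w)) + (\<Sum>w\<in>U. t * (evp t (h (S w)) * Tw n T w))"
  proof -
    have "ev n t T (lmulT n i h) = (\<Sum>w\<in>D. evp t (lmulT n i h w) * Tw n T w) + (\<Sum>w\<in>U. evp t (lmulT n i h w) * Tw n T w)"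
      unfolding ev_def PDU by (rule sum.union_disjoint[OF fD fU DUe])
    also have "(\<Sum>w\<in>D. evp t (lmulT n i h w) * Tw n T w) = (\<Sum>w\<in>D. evp t (h (S w)) * Tw n T w + (t - 1) * (evp t (h w) * Tw n T w))"
    proof (rule sum.cong[OF refl])
      fix w assume w: "w \<in> D"
      have "lmulT n i h w = h (S w) + [:-1, 1:] * h w" using w by (simp add: lmulT_def D_def S_def)
      then have "evp t (lmulT n i h w) = evp t (h (S w)) + (of_int (-1) + of_int 1 * t) * evp t (h w)"
        by (simp only: evp_add evp_lin[OF tc])
      then show "evp t (lmulT n i h w) * Tw n T w = evp t (h (S w)) * Tw n T w + (t - 1) * (evp t (h w) * Tw n T w)"
        by (simp add: distrib_right mult.assoc)
    qed
    also have "(\<Sum>w\<in>U. evp t (lmulT n i h w) * Tw n T w) = (\<Sum>w\<in>U. t * (evp t (h (S w)) * Tw n T w))"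
    proof (rule sum.cong[OF refl])
      fix w assume w: "w \<in> U"
      have "lmulT n i h w = [:0, 1:] * h (S w)" using w by (simp add: lmulT_def U_def S_def)
      then have "evp t (lmulT n i h w) = (of_int 0 + of_int 1 * t) * evp t (h (S w))"
        by (simp only: evp_lin[OF tc])
      then show "evp t (lmulT n i h w) * Tw n T w = t * (evp t (h (S w)) * Tw n T w)"
        by (simp add: mult.assoc)
    qed
    finally show ?thesis by (simp add: sum.distrib)
  qed
  have R: "T i * ev n t T h = (\<Sum>w\<in>U. evp t (h w) * Tw n T (S w))
      + (\<Sum>w\<in>D. (t - 1) * (evp t (h w) * Tw n T w)) + (\<Sum>w\<in>D. t * (evp t (h w) * Tw n T (S w)))"
  proof -
    have c: "T i * (evp t (h w) * Y) = evp t (h w) * (T i * Y)" for w Y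
      using evp_central[OF tc, of "h w" "T i"] by (simp add: mult.assoc[symmetric])
    have c2: "evp t (h w) * (a * Y) = a * (evp t (h w) * Y)" if "a = t - 1 \<or> a = t" for w Y a
    proof -
      have "evp t (h w) * a = a * evp t (h w)"
        using that evp_central[OF tc, of "h w" t] evp_central[OF tc, of "h w" 1]
        by (auto simp: right_diff_distrib left_diff_distrib)
      then show ?thesis by (simp add: mult.assoc[symmetric])
    qed
    have "T i * ev n t T h = (\<Sum>w\<in>U. T i * (evp t (h w) * Tw n T w)) + (\<Sum>w\<in>D. T i * (evp t (h w) * Tw n T w))"
      unfolding ev_def sum_distrib_left PDU by (subst sum.union_disjoint[OF fD fU DUe]) simp
    also have "(\<Sum>w\<in>U. T i * (evp t (h w) * Tw n T w)) = (\<Sum>w\<in>U. evp t (h w) * Tw n T (S w))"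
      by (rule sum.cong[OF refl]) (simp add: c TU)
    also have "(\<Sum>w\<in>D. T i * (evp t (h w) * Tw n T w)) = (\<Sum>w\<in>D. (t - 1) * (evp t (h w) * Tw n T w) + t * (evp t (h w) * Tw n T (S w)))"
      by (rule sum.cong[OF refl]) (simp add: c TD distrib_left c2)
    finally show ?thesis by (simp add: sum.distrib add.assoc)
  qed
  have "(\<Sum>w\<in>U. evp t (h w) * Tw n T (S w)) = (\<Sum>w\<in>D. evp t (h (S w)) * Tw n T w)"
    using reU[of "\<lambda>w. evp t (h w) * Tw n T (S w)"] by (simp add: SS)
  moreover have "(\<Sum>w\<in>D. t * (evp t (h w) * Tw n T (S w))) = (\<Sum>w\<in>U. t * (evp t (h (S w)) * Tw n T w))"
    using reD[of "\<lambda>w. t * (evp t (h w) * Tw n T (S w))"] by (simp add: SS)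
  ultimately show ?thesis using L R by simp
qed

lemma ev_lmulTbar:
  assumes i: "i \<in> {1..<n}"
  shows "ev n t T (lmulTbar n i h) = (T i + 1 - t) * ev n t T h"
proof -
  have "ev n t T (lmulTbar n i h) = ev n t T (lmulT n i h) + ev n t T (\<lambda>w. [:1, -1:] * h w)"
    unfolding lmulTbar_def by (rule ev_add)
  also have "\<dots> = T i * ev n t T h + (of_int 1 + of_int (-1) * t) * ev n t T h"
    by (simp only: ev_lmulT[OF i] ev_lin[OF tc])
  finally show ?thesis by (simp add: algebra_simps)
qed

lemma ev_foldr_lmulT:
  "set a \<subseteq> {1..<n} \<Longrightarrow> ev n t T (foldr (lmulT n) a h) = prod_list (map T a) * ev n t T h"
  by (induction a) (auto simp: ev_lmulT mult.assoc)

lemma ev_foldr_lmulTbar: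
  "set a \<subseteq> {1..<n} \<Longrightarrow> ev n t T (foldr (lmulTbar n) a h) = prod_list (map (\<lambda>j. T j + 1 - t) a) * ev n t T h"
  by (induction a) (auto simp: ev_lmulTbar mult.assoc)

lemma ev_lmulTw:
  assumes "w \<in> perms n"
  shows "ev n t T (lmulTw n w h) = Tw n T w * ev n t T h"
  unfolding lmulTw_def Tw_def using ev_foldr_lmulT reduced_set[OF rword_reduced[OF assms]] by blast

lemma ev_lmulTbarw:
  assumes "w \<in> perms n"
  shows "ev n t T (lmulTbarw n w h) = prod_list (map (\<lambda>j. T j + 1 - t) (rword n w)) * ev n t T h"
  unfolding lmulTbarw_def using ev_foldr_lmulTbar reduced_set[OF rword_reduced[OF assms]] by blast

end


definition blk :: "nat \<Rightarrow> nat \<Rightarrow> (nat \<Rightarrow> nat) \<Rightarrow> bool" where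
  "blk n l y \<longleftrightarrow> (\<forall>x\<in>{1..n}. (y x \<le> l) = (x \<le> l))"

definition G :: "nat \<Rightarrow> nat \<Rightarrow> (nat \<Rightarrow> nat) \<Rightarrow> bool" where
  "G n l v \<longleftrightarrow> (\<forall>(a, b)\<in>Inv n v. a \<le> l \<and> l < b)"

lemma stab_varpi:
  "y \<in> stab n (varpi l) \<longleftrightarrow> y \<in> perms n \<and> blk n l y"
proof
  assume y: "y \<in> stab n (varpi l)"
  then have yp: "y \<in> perms n" and c: "\<forall>i\<in>{1..n}. varpi l (inv y i) = varpi l i"
    by (auto simp: stab_def perm_act_def)
  have "(y x \<le> l) = (x \<le> l)" if x: "x \<in> {1..n}" for x
  proof -
    have "y x \<in> {1..n}" using x permutes_in_image[OF perms_perm[OF yp]] by auto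
    from c[rule_format, OF this] show ?thesis
      using permutes_inverses(2)[OF perms_perm[OF yp]] by (auto simp: varpi_def split: if_splits)
  qed
  then show "y \<in> perms n \<and> blk n l y" using yp by (auto simp: blk_def)
next
  assume a: "y \<in> perms n \<and> blk n l y"
  then have yp: "y permutes {1..n}" by (simp add: perms_def)
  have "varpi l (inv y i) = varpi l i" if i: "i \<in> {1..n}" for i
  proof -
    have "inv y i \<in> {1..n}" using inv_in[OF yp i] .
    then have "(y (inv y i) \<le> l) = (inv y i \<le> l)" using a by (auto simp: blk_def)
    then show ?thesis using permutes_inverses(1)[OF yp] by (simp add: varpi_def)
  qed
  then show "y \<in> stab n (varpi l)" using a by (auto simp: stab_def perm_act_def)
qed

lemma stab_perms: "y \<in> stab n lam \<Longrightarrow> y \<in> perms n"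
  by (simp add: stab_def)

lemma blk_inv:
  assumes yp: "y \<in> perms n" and b: "blk n l y"
  shows "blk n l (inv y)"
  unfolding blk_def
proof
  fix x assume x: "x \<in> {1..n}"
  have "inv y x \<in> {1..n}" using inv_in[OF perms_perm[OF yp] x] .
  with b have "(y (inv y x) \<le> l) = (inv y x \<le> l)" by (auto simp: blk_def)
  then show "(inv y x \<le> l) = (x \<le> l)" using permutes_inverses(1)[OF perms_perm[OF yp]] by simp
qed

lemma G_sub: "G n l v \<Longrightarrow> Inv n v' \<subseteq> Inv n v \<Longrightarrow> G n l v'"
  unfolding G_def by blast

lemma crossing:
  assumes r: "reduced_word n v (j # a)" and g: "G n l v"
  shows "G n l (sref j \<circ> v)" and "inv (sref j \<circ> v) j \<le> l" and "l < inv (sref j \<circ> v) (Suc j)"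
    and "reduced_word n (sref j \<circ> v) a"
proof -
  let ?v = "sref j \<circ> v"
  have ra: "reduced_word n ?v a" and l: "len n v = Suc (len n ?v)" using reduced_Cons_down[OF r] by auto
  have vp: "?v \<in> perms n" using reduced_perms[OF ra] .
  have j: "j \<in> {1..<n}" using reduced_set[OF r] by auto
  have e: "sref j \<circ> ?v = v" by simp
  have "len n ?v < len n (sref j \<circ> ?v)" using l by simp
  then have pq: "inv ?v j < inv ?v (Suc j)" using len_up_iff[OF vp j] by simp
  from Inv_step[OF perms_perm[OF vp] j pq] have I: "Inv n v = insert (inv ?v j, inv ?v (Suc j)) (Inv n ?v)"
    by simp
  show "G n l ?v" using G_sub[OF g] I by auto
  have "(inv ?v j, inv ?v (Suc j)) \<in> Inv n v" using I by simp
  then show "inv ?v j \<le> l" "l < inv ?v (Suc j)" using g unfolding G_def by auto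
  show "reduced_word n ?v a" by (rule ra)
qed

definition delta :: "(nat \<Rightarrow> nat) \<Rightarrow> hn" where
  "delta y = (\<lambda>w. if w = y then 1 else 0)"

lemma lmulT_delta:
  assumes y: "y \<in> perms n" and j: "j \<in> {1..<n}" and up: "len n (sref j \<circ> y) = Suc (len n y)"
  shows "lmulT n j (delta y) = delta (sref j \<circ> y)"
proof (rule ext)
  fix w
  have sy: "sref j \<circ> y \<in> perms n" by (rule sref_comp_perm[OF y j])
  have ne: "sref j \<circ> y \<noteq> y" using up by auto
  show "lmulT n j (delta y) w = delta (sref j \<circ> y) w"
  proof (cases "w \<in> perms n")
    case False then show ?thesis using sy by (auto simp: lmulT_def delta_def)
  next
    case True
    show ?thesis
    proof (cases "w = sref j \<circ> y")
      case True
      then have "len n (sref j \<circ> w) < len n w" using up by simp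
      then show ?thesis using True \<open>w \<in> perms n\<close> ne by (simp add: lmulT_def delta_def)
    next
      case False
      have "sref j \<circ> w \<noteq> y" using False by auto
      moreover have "w = y \<Longrightarrow> \<not> len n (sref j \<circ> w) < len n w" using up by simp
      ultimately show ?thesis using False \<open>w \<in> perms n\<close> by (auto simp: lmulT_def delta_def)
    qed
  qed
qed

lemma blk_perm_image:
  assumes "y \<in> perms n" "blk n l y" "x \<in> {1..n}"
  shows "y x \<in> {1..n}"
  using assms permutes_in_image[OF perms_perm] by blast

lemma foldr_delta:
  assumes r: "reduced_word n v a" and g: "G n l v" and y: "y \<in> perms n" and b: "blk n l y"
  shows "foldr (lmulT n) a (delta y) = delta (v \<circ> y)"
  using r g
proof (induction a arbitrary: v)
  case Nil
  then have "v = id" by (simp add: reduced_word_def)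
  then show ?case by simp
next
  case (Cons j a)
  let ?v = "sref j \<circ> v"
  have g': "G n l ?v" and c1: "inv ?v j \<le> l" and c2: "l < inv ?v (Suc j)" and ra: "reduced_word n ?v a"
    using crossing[OF Cons.prems] by auto
  have IH: "foldr (lmulT n) a (delta y) = delta (?v \<circ> y)" using Cons.IH[OF ra g'] .
  have vp: "?v \<in> perms n" using reduced_perms[OF ra] .
  have j: "j \<in> {1..<n}" using reduced_set[OF Cons.prems(1)] by auto
  have vy: "?v \<circ> y \<in> perms n" using vp y permutes_compose unfolding perms_def by blast
  have iv: "inv (?v \<circ> y) = inv y \<circ> inv ?v"
    using o_inv_distrib[of ?v y] perms_perm[OF vp] perms_perm[OF y] permutes_bij by blast
  have jn: "j \<in> {1..n}" "Suc j \<in> {1..n}" using j by auto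
  have i1: "inv ?v j \<in> {1..n}" "inv ?v (Suc j) \<in> {1..n}"
    using inv_in[OF perms_perm[OF vp]] jn by auto
  have bi: "blk n l (inv y)" using blk_inv[OF y b] .
  have b1: "(inv y (inv ?v j) \<le> l) = (inv ?v j \<le> l)" using bi i1(1) unfolding blk_def by blast
  have b2: "(inv y (inv ?v (Suc j)) \<le> l) = (inv ?v (Suc j) \<le> l)" using bi i1(2) unfolding blk_def by blast
  have "inv y (inv ?v j) \<le> l" "l < inv y (inv ?v (Suc j))"
    using b1 b2 c1 c2 by auto
  then have "inv (?v \<circ> y) j < inv (?v \<circ> y) (Suc j)" using iv by simp
  then have up: "len n (sref j \<circ> (?v \<circ> y)) = Suc (len n (?v \<circ> y))" using len_up[OF vy j] by simp
  have "foldr (lmulT n) (j # a) (delta y) = lmulT n j (delta (?v \<circ> y))" using IH by simp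
  also have "\<dots> = delta (sref j \<circ> (?v \<circ> y))" by (rule lmulT_delta[OF vy j up])
  also have "sref j \<circ> (?v \<circ> y) = v \<circ> y" by (simp add: comp_assoc)
  finally show ?case .
qed

lemma lmulT_lin:
  "lmulT n i (\<lambda>w. \<Sum>x\<in>A. c x * f x w) = (\<lambda>w. \<Sum>x\<in>A. c x * lmulT n i (f x) w)"
proof (rule ext)
  fix w
  let ?a = "[:-1, 1:] :: int poly" and ?b = "[:0, 1:] :: int poly"
  have e1: "?a * (\<Sum>x\<in>A. c x * f x w) = (\<Sum>x\<in>A. c x * (?a * f x w))"
    by (simp only: sum_distrib_left mult.left_commute)
  have e2: "?b * (\<Sum>x\<in>A. c x * f x (sref i \<circ> w)) = (\<Sum>x\<in>A. c x * (?b * f x (sref i \<circ> w)))"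
    by (simp only: sum_distrib_left mult.left_commute)
  show "lmulT n i (\<lambda>w. \<Sum>x\<in>A. c x * f x w) w = (\<Sum>x\<in>A. c x * lmulT n i (f x) w)"
    unfolding lmulT_def
    by (simp only: e1 e2 if_distrib[of "\<lambda>z. c _ * z"] sum.If_cases) (simp only: distrib_left sum.distrib if_distrib[symmetric] split: if_splits; simp add: sum.distrib)
qed

lemma foldr_lmulT_lin:
  "foldr (lmulT n) a (\<lambda>w. \<Sum>x\<in>A. c x * f x w) = (\<lambda>w. \<Sum>x\<in>A. c x * foldr (lmulT n) a (f x) w)"
  by (induction a) (simp_all add: lmulT_lin)


locale colsetup =
  fixes n l :: nat and C :: "nat set"
  assumes Cc: "C \<in> cols n l"
begin

abbreviation "xs \<equiv> sorted_list_of_set C"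
abbreviation "ys \<equiv> sorted_list_of_set ({1..n} - C)"

lemma Csub: "C \<subseteq> {1..n}" and cardC: "card C = l" and finC: "finite C"
  using Cc by (auto simp: cols_def intro: finite_subset)

lemma ln: "l \<le> n"
  using card_mono[OF _ Csub] cardC by simp

lemma lxs: "length xs = l" and lys: "length ys = n - l"
  using cardC finC Csub by (auto simp: card_Diff_subset)

lemma sxs: "set xs = C" and sys: "set ys = {1..n} - C"
  using finC by auto

lemma u_lo: "1 \<le> k \<Longrightarrow> k \<le> l \<Longrightarrow> ucol n C k = xs ! (k - 1)"
  by (simp add: ucol_def cardC)

lemma u_hi: "l < k \<Longrightarrow> k \<le> n \<Longrightarrow> ucol n C k = ys ! (k - l - 1)"
  by (simp add: ucol_def cardC)

lemma u_out: "k \<notin> {1..n} \<Longrightarrow> ucol n C k = k"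
  using ln by (auto simp: ucol_def cardC)

lemma u_inC: "k \<in> {1..n} \<Longrightarrow> (ucol n C k \<in> C) = (k \<le> l)"
proof -
  assume k: "k \<in> {1..n}"
  show ?thesis
  proof (cases "k \<le> l")
    case True
    then have "ucol n C k = xs ! (k - 1)" using k u_lo by auto
    moreover have "k - 1 < length xs" using True k lxs by auto
    ultimately show ?thesis using True sxs nth_mem by metis
  next
    case False
    then have "ucol n C k = ys ! (k - l - 1)" using k u_hi by auto
    moreover have "k - l - 1 < length ys" using False k lys by auto
    ultimately have "ucol n C k \<in> {1..n} - C" using sys nth_mem by metis
    then show ?thesis using False by auto
  qed
qed

lemma u_range: "k \<in> {1..n} \<Longrightarrow> ucol n C k \<in> {1..n}"
proof -
  assume k: "k \<in> {1..n}"
  show ?thesis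
  proof (cases "k \<le> l")
    case True
    then show ?thesis using u_inC[OF k] Csub by auto
  next
    case False
    then have "ucol n C k = ys ! (k - l - 1)" using k u_hi by auto
    moreover have "k - l - 1 < length ys" using False k lys by auto
    ultimately have "ucol n C k \<in> {1..n} - C" using sys nth_mem by metis
    then show ?thesis by auto
  qed
qed

lemma u_image_lo: "ucol n C ` {1..l} = C"
proof
  show "ucol n C ` {1..l} \<subseteq> C" using u_inC ln by auto
  show "C \<subseteq> ucol n C ` {1..l}"
  proof
    fix c assume "c \<in> C"
    then obtain m where m: "m < length xs" "xs ! m = c" using sxs by (metis in_set_conv_nth)
    then have "ucol n C (Suc m) = c" using u_lo[of "Suc m"] lxs by auto
    moreover have "Suc m \<in> {1..l}" using m lxs by auto
    ultimately show "c \<in> ucol n C ` {1..l}" by (metis image_eqI)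
  qed
qed

lemma u_image: "ucol n C ` {1..n} = {1..n}"
proof
  show "ucol n C ` {1..n} \<subseteq> {1..n}" using u_range by auto
  show "{1..n} \<subseteq> ucol n C ` {1..n}"
  proof
    fix c assume c: "c \<in> {1..n}"
    show "c \<in> ucol n C ` {1..n}"
    proof (cases "c \<in> C")
      case True
      then have "c \<in> ucol n C ` {1..l}" using u_image_lo by simp
      moreover have "{1..l} \<subseteq> {1..n}" using ln by auto
      ultimately show ?thesis by blast
    next
      case False
      then obtain m where m: "m < length ys" "ys ! m = c" using sys c by (metis Diff_iff in_set_conv_nth)
      then have "ucol n C (l + Suc m) = c" using u_hi[of "l + Suc m"] lys by auto
      moreover have "l + Suc m \<in> {1..n}" using m lys by auto
      ultimately show ?thesis by (metis image_eqI)
    qed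
  qed
qed

lemma u_perm: "ucol n C \<in> perms n"
proof -
  have "inj_on (ucol n C) {1..n}" by (rule finite_surj_inj) (simp_all only: u_image finite_atLeastAtMost subset_refl)
  then have "bij_betw (ucol n C) {1..n} {1..n}" using u_image by (simp add: bij_betw_def)
  then have "ucol n C permutes {1..n}" by (rule bij_imp_permutes) (rule u_out)
  then show ?thesis by (simp add: perms_def)
qed

lemma u_mono:
  assumes a: "a \<in> {1..n}" and b: "b \<in> {1..n}" and ab: "a < b" and same: "(a \<le> l) = (b \<le> l)"
  shows "ucol n C a < ucol n C b"
proof (cases "b \<le> l")
  case True
  have sw: "sorted_wrt (<) xs" by (rule strict_sorted_list_of_set)
  have "xs ! (a - 1) < xs ! (b - 1)" using sorted_wrt_nth_less[OF sw, of "a - 1" "b - 1"] a b ab True lxs by auto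
  then show ?thesis using u_lo a b True ab by auto
next
  case False
  have sw: "sorted_wrt (<) ys" by (rule strict_sorted_list_of_set)
  have "ys ! (a - l - 1) < ys ! (b - l - 1)"
    using sorted_wrt_nth_less[OF sw, of "a - l - 1" "b - l - 1"] a b ab False same lys by auto
  then show ?thesis using u_hi a b False same ab by auto
qed

lemma u_G: "G n l (ucol n C)"
  unfolding G_def
proof (safe)
  fix a b assume ab: "(a, b) \<in> Inv n (ucol n C)"
  then have a: "a \<in> {1..n}" and b: "b \<in> {1..n}" and lt: "a < b" and inv: "ucol n C b < ucol n C a"
    by (auto simp: Inv_def)
  have "(a \<le> l) \<noteq> (b \<le> l)" using u_mono[OF a b lt] inv by auto
  then show "a \<le> l" "l < b" using lt by auto
qed

end

lemma blk_image:
  assumes y: "y \<in> perms n" and b: "blk n l y" and l: "l \<le> n"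
  shows "y ` {1..l} = {1..l}"
proof
  have yp: "y permutes {1..n}" using y by (simp add: perms_def)
  show "y ` {1..l} \<subseteq> {1..l}"
  proof
    fix z assume "z \<in> y ` {1..l}"
    then obtain x where x: "x \<in> {1..l}" "z = y x" by auto
    then have "x \<in> {1..n}" using l by auto
    then show "z \<in> {1..l}" using b x permutes_in_image[OF yp] unfolding blk_def by auto
  qed
  show "{1..l} \<subseteq> y ` {1..l}"
  proof
    fix z assume z: "z \<in> {1..l}"
    then have zn: "z \<in> {1..n}" using l by auto
    have "inv y z \<in> {1..n}" using inv_in[OF yp zn] .
    moreover have "(inv y z \<le> l) = (z \<le> l)" using blk_inv[OF y b] zn unfolding blk_def by blast
    moreover have "y (inv y z) = z" using permutes_inverses(1)[OF yp] by simp
    ultimately show "z \<in> y ` {1..l}" using z by (metis atLeastAtMost_iff image_eqI)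
  qed
qed

lemma u_perms: "F \<in> cols n l \<Longrightarrow> ucol n F \<in> perms n"
  using colsetup.u_perm colsetup.intro by blast

lemma comp_perms: "v \<in> perms n \<Longrightarrow> y \<in> perms n \<Longrightarrow> v \<circ> y \<in> perms n"
  unfolding perms_def using permutes_compose by blast

lemma finite_cols[simp]: "finite (cols n l)"
  by (rule finite_subset[of _ "Pow {1..n}"]) (auto simp: cols_def)

lemma finite_stab[simp]: "finite (stab n lam)"
  by (rule finite_subset[of _ "perms n"]) (auto simp: stab_def)

lemma factor:
  assumes w: "w \<in> perms n" and l: "l \<le> n"
  shows "w ` {1..l} \<in> cols n l" and "inv (ucol n (w ` {1..l})) \<circ> w \<in> stab n (varpi l)"
    and "ucol n (w ` {1..l}) \<circ> (inv (ucol n (w ` {1..l})) \<circ> w) = w"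
proof -
  have wp: "w permutes {1..n}" using w by (simp add: perms_def)
  let ?F = "w ` {1..l}"
  have "inj_on w {1..l}" using permutes_inj[OF wp] by (simp add: inj_on_def inj_def)
  then have "card ?F = l" by (simp add: card_image)
  moreover have "?F \<subseteq> {1..n}"
  proof
    fix z assume "z \<in> ?F"
    then obtain x where "x \<in> {1..l}" "z = w x" by blast
    then have "x \<in> {1..n}" using l by auto
    then show "z \<in> {1..n}" using \<open>z = w x\<close> permutes_in_image[OF wp] by simp
  qed
  ultimately show F: "?F \<in> cols n l" by (simp add: cols_def)
  interpret colsetup n l ?F by (rule colsetup.intro[OF F])
  let ?u = "ucol n ?F"
  have up: "?u permutes {1..n}" using u_perm by (simp add: perms_def)
  show "?u \<circ> (inv ?u \<circ> w) = w"
    using permutes_inverses(1)[OF up] by (simp add: comp_def)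
  have yp: "inv ?u \<circ> w \<in> perms n" using permutes_inv[OF up] wp permutes_compose unfolding perms_def by blast
  have "blk n l (inv ?u \<circ> w)"
    unfolding blk_def
  proof
    fix x assume x: "x \<in> {1..n}"
    have wx: "w x \<in> {1..n}" using x permutes_in_image[OF wp] by auto
    have z: "inv ?u (w x) \<in> {1..n}" using inv_in[OF up wx] .
    have "(?u (inv ?u (w x)) \<in> ?F) = (inv ?u (w x) \<le> l)" using u_inC[OF z] .
    moreover have "?u (inv ?u (w x)) = w x" using permutes_inverses(1)[OF up] by simp
    moreover have "(w x \<in> ?F) = (x \<le> l)" using x permutes_inj[OF wp] by (auto simp: inj_def) (metis)
    ultimately show "((inv ?u \<circ> w) x \<le> l) = (x \<le> l)" by simp
  qed
  then show "inv ?u \<circ> w \<in> stab n (varpi l)" using yp stab_varpi by blast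
qed

lemma factor_image:
  assumes F: "F \<in> cols n l" and y: "y \<in> stab n (varpi l)"
  shows "(ucol n F \<circ> y) ` {1..l} = F"
proof -
  interpret colsetup n l F by (rule colsetup.intro[OF F])
  have "y ` {1..l} = {1..l}" using blk_image[of y n l] y ln stab_varpi by blast
  moreover have "(ucol n F \<circ> y) ` {1..l} = ucol n F ` (y ` {1..l})" by (rule image_comp[symmetric])
  ultimately show ?thesis using u_image_lo by simp
qed

lemma factor_unique:
  assumes F: "F \<in> cols n l" and D: "D \<in> cols n l" and y: "y \<in> stab n (varpi l)"
    and z: "z \<in> stab n (varpi l)" and e: "ucol n F \<circ> y = ucol n D \<circ> z"
  shows "F = D \<and> y = z"
proof -
  have FD: "F = D" using factor_image[OF F y] factor_image[OF D z] e by simp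
  have up: "ucol n F permutes {1..n}" using u_perms[OF F] by (simp add: perms_def)
  have "inv (ucol n F) \<circ> (ucol n F \<circ> y) = inv (ucol n F) \<circ> (ucol n F \<circ> z)" using e FD by simp
  then have "y = z" using permutes_inv_o(2)[OF up] by (simp add: comp_assoc[symmetric])
  then show ?thesis using FD by simp
qed

lemma double_sum:
  assumes l: "l \<le> n"
  shows "(\<Sum>F\<in>cols n l. \<Sum>y\<in>stab n (varpi l). c F y * delta (ucol n F \<circ> y) w)
    = (if w \<in> perms n then c (w ` {1..l}) (inv (ucol n (w ` {1..l})) \<circ> w) else 0)"
proof -
  let ?B = "cols n l \<times> stab n (varpi l)"
  have "(\<Sum>F\<in>cols n l. \<Sum>y\<in>stab n (varpi l). c F y * delta (ucol n F \<circ> y) w)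
      = (\<Sum>p\<in>?B. c (fst p) (snd p) * delta (ucol n (fst p) \<circ> snd p) w)"
    by (simp add: sum.cartesian_product split_beta)
  also have "\<dots> = (if w \<in> perms n then c (w ` {1..l}) (inv (ucol n (w ` {1..l})) \<circ> w) else 0)"
  proof (cases "w \<in> perms n")
    case False
    have "delta (ucol n (fst p) \<circ> snd p) w = 0" if "p \<in> ?B" for p
    proof -
      have "ucol n (fst p) \<circ> snd p \<in> perms n"
        using that by (intro comp_perms[OF u_perms stab_perms]) auto
      then show ?thesis using False by (auto simp: delta_def)
    qed
    then show ?thesis using False by simp
  next
    case True
    let ?p0 = "(w ` {1..l}, inv (ucol n (w ` {1..l})) \<circ> w)"
    have p0: "?p0 \<in> ?B" using factor[OF True l] by simp
    have eq: "delta (ucol n (fst p) \<circ> snd p) w = (if p = ?p0 then 1 else 0)" if p: "p \<in> ?B" for p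
    proof -
      have "(w = ucol n (fst p) \<circ> snd p) = (p = ?p0)"
      proof
        assume a: "w = ucol n (fst p) \<circ> snd p"
        have pf: "fst p \<in> cols n l" "snd p \<in> stab n (varpi l)" using p by auto
        have p0f: "fst ?p0 \<in> cols n l" "snd ?p0 \<in> stab n (varpi l)" using p0 by auto
        have "ucol n (fst p) \<circ> snd p = ucol n (fst ?p0) \<circ> snd ?p0" using a factor(3)[OF True l] by simp
        from factor_unique[OF pf(1) p0f(1) pf(2) p0f(2) this]
        have "fst p = fst ?p0 \<and> snd p = snd ?p0" .
        then show "p = ?p0" by (simp add: prod_eq_iff)
      next
        assume "p = ?p0"
        then show "w = ucol n (fst p) \<circ> snd p" using factor(3)[OF True l] by simp
      qed
      then show ?thesis by (auto simp: delta_def)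
    qed
    have "(\<Sum>p\<in>?B. c (fst p) (snd p) * delta (ucol n (fst p) \<circ> snd p) w)
        = (\<Sum>p\<in>?B. if p = ?p0 then c (fst p) (snd p) else 0)"
      by (rule sum.cong[OF refl]) (simp add: eq)
    also have "\<dots> = c (fst ?p0) (snd ?p0)" using p0 by (simp add: sum.delta')
    finally show ?thesis using True by simp
  qed
  finally show ?thesis .
qed

lemma expand_stab:
  assumes g: "in_Hstab n lam g"
  shows "g = (\<lambda>w. \<Sum>y\<in>stab n lam. g y * delta y w)"
proof (rule ext)
  fix w
  have "(\<Sum>y\<in>stab n lam. g y * delta y w) = (\<Sum>y\<in>stab n lam. if y = w then g y else 0)"
    by (rule sum.cong) (auto simp: delta_def)
  also have "\<dots> = (if w \<in> stab n lam then g w else 0)" by (simp add: sum.delta')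
  also have "\<dots> = g w" using g by (auto simp: in_Hstab_def)
  finally show "g w = (\<Sum>y\<in>stab n lam. g y * delta y w)" by simp
qed

lemma lmulTw_stab:
  assumes F: "F \<in> cols n l" and g: "in_Hstab n (varpi l) g"
  shows "lmulTw n (ucol n F) g = (\<lambda>w. \<Sum>y\<in>stab n (varpi l). g y * delta (ucol n F \<circ> y) w)"
proof -
  interpret colsetup n l F by (rule colsetup.intro[OF F])
  have r: "reduced_word n (ucol n F) (rword n (ucol n F))" by (rule rword_reduced[OF u_perm])
  have "lmulTw n (ucol n F) g = foldr (lmulT n) (rword n (ucol n F)) (\<lambda>w. \<Sum>y\<in>stab n (varpi l). g y * delta y w)"
    unfolding lmulTw_def using expand_stab[OF g] by simp
  also have "\<dots> = (\<lambda>w. \<Sum>y\<in>stab n (varpi l). g y * foldr (lmulT n) (rword n (ucol n F)) (delta y) w)"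
    by (rule foldr_lmulT_lin)
  also have "\<dots> = (\<lambda>w. \<Sum>y\<in>stab n (varpi l). g y * delta (ucol n F \<circ> y) w)"
  proof (rule ext, rule sum.cong[OF refl])
    fix w y assume y: "y \<in> stab n (varpi l)"
    then have "y \<in> perms n" "blk n l y" using stab_varpi by auto
    then show "g y * foldr (lmulT n) (rword n (ucol n F)) (delta y) w = g y * delta (ucol n F \<circ> y) w"
      using foldr_delta[OF r u_G] by simp
  qed
  finally show ?thesis .
qed

definition dcand :: "nat \<Rightarrow> nat \<Rightarrow> hn \<Rightarrow> nat set \<Rightarrow> hn" where
  "dcand n l h = (\<lambda>F. if F \<in> cols n l then (\<lambda>y. if y \<in> stab n (varpi l) then h (ucol n F \<circ> y) else 0) else (\<lambda>_. 0))"

lemma decomp_eq: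
  assumes supp: "\<And>w. w \<notin> perms n \<Longrightarrow> h w = 0" and l: "l \<le> n"
  shows "decomp n l h = dcand n l h"
  unfolding decomp_def
proof (rule the_equality)
  let ?c = "dcand n l h"
  have st: "in_Hstab n (varpi l) (?c F)" for F by (auto simp: in_Hstab_def dcand_def)
  show "(\<forall>F. F \<notin> cols n l \<longrightarrow> ?c F = (\<lambda>_. 0)) \<and> (\<forall>F\<in>cols n l. in_Hstab n (varpi l) (?c F))
    \<and> h = (\<lambda>w. \<Sum>F\<in>cols n l. lmulTw n (ucol n F) (?c F) w)"
  proof (intro conjI ballI allI impI)
    show "F \<notin> cols n l \<Longrightarrow> ?c F = (\<lambda>_. 0)" for F by (simp add: dcand_def)
    show "in_Hstab n (varpi l) (?c F)" for F by (rule st)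
    show "h = (\<lambda>w. \<Sum>F\<in>cols n l. lmulTw n (ucol n F) (?c F) w)"
    proof (rule ext)
      fix w
      have "(\<Sum>F\<in>cols n l. lmulTw n (ucol n F) (?c F) w)
          = (\<Sum>F\<in>cols n l. \<Sum>y\<in>stab n (varpi l). ?c F y * delta (ucol n F \<circ> y) w)"
        by (rule sum.cong[OF refl]) (simp add: lmulTw_stab[OF _ st])
      also have "\<dots> = (if w \<in> perms n then ?c (w ` {1..l}) (inv (ucol n (w ` {1..l})) \<circ> w) else 0)"
        by (rule double_sum[OF l])
      also have "\<dots> = h w"
        using factor[OF _ l, of w] supp[of w] by (auto simp: dcand_def)
      finally show "h w = (\<Sum>F\<in>cols n l. lmulTw n (ucol n F) (?c F) w)" by simp
    qed
  qed
next
  fix hF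
  assume a: "(\<forall>F. F \<notin> cols n l \<longrightarrow> hF F = (\<lambda>_. 0)) \<and> (\<forall>F\<in>cols n l. in_Hstab n (varpi l) (hF F))
    \<and> h = (\<lambda>w. \<Sum>F\<in>cols n l. lmulTw n (ucol n F) (hF F) w)"
  have hw: "h w = (if w \<in> perms n then hF (w ` {1..l}) (inv (ucol n (w ` {1..l})) \<circ> w) else 0)" for w
  proof -
    have "h w = (\<Sum>F\<in>cols n l. lmulTw n (ucol n F) (hF F) w)" using a by metis
    also have "\<dots> = (\<Sum>F\<in>cols n l. \<Sum>y\<in>stab n (varpi l). hF F y * delta (ucol n F \<circ> y) w)"
      by (rule sum.cong[OF refl]) (simp add: lmulTw_stab a)
    also have "\<dots> = (if w \<in> perms n then hF (w ` {1..l}) (inv (ucol n (w ` {1..l})) \<circ> w) else 0)"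
      by (rule double_sum[OF l])
    finally show ?thesis .
  qed
  show "hF = dcand n l h"
  proof (rule ext, rule ext)
    fix F y
    show "hF F y = dcand n l h F y"
    proof (cases "F \<in> cols n l")
      case False then show ?thesis using a by (simp add: dcand_def)
    next
      case F: True
      show ?thesis
      proof (cases "y \<in> stab n (varpi l)")
        case False
        then show ?thesis using a F by (auto simp: dcand_def in_Hstab_def)
      next
        case y: True
        let ?w = "ucol n F \<circ> y"
        have wp: "?w \<in> perms n" by (rule comp_perms[OF u_perms[OF F] stab_perms[OF y]])
        have fi: "?w ` {1..l} = F" by (rule factor_image[OF F y])
        have up: "ucol n F permutes {1..n}" using u_perms[OF F] by (simp add: perms_def)
        have "inv (ucol n F) \<circ> ?w = y" using permutes_inv_o(2)[OF up] by (simp add: comp_assoc[symmetric])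
        then have "h ?w = hF F y" using hw[of ?w] wp fi by simp
        then show ?thesis using F y by (simp add: dcand_def)
      qed
    qed
  qed
qed


context
  fixes n :: nat and t tinv :: "'a::ring_1" and T X Xinv :: "nat \<Rightarrow> 'a"
  assumes H: "hecke_rels n t tinv T X Xinv"
begin

lemma XX: "i \<in> {1..n} \<Longrightarrow> j \<in> {1..n} \<Longrightarrow> X i * X j = X j * X i"
  using H by (simp add: hecke_rels_def)

lemma TX: "i \<in> {1..<n} \<Longrightarrow> j \<in> {1..n} \<Longrightarrow> j \<noteq> i \<Longrightarrow> j \<noteq> Suc i \<Longrightarrow> T i * X j = X j * T i"
  using H by (simp add: hecke_rels_def)

lemma TXT: "i \<in> {1..<n} \<Longrightarrow> T i * X i * T i = t * X (Suc i)"
  using H by (simp add: hecke_rels_def)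

lemma quad: "i \<in> {1..<n} \<Longrightarrow> T i * T i = (t - 1) * T i + t"
  using H by (simp add: hecke_rels_def)

lemma tinv: "t * tinv = 1" "tinv * t = 1"
  using H by (simp_all add: hecke_rels_def)

lemma tcen: "t * a = a * t"
  using H by (simp add: hecke_rels_def)

lemma Tbar_inv: "i \<in> {1..<n} \<Longrightarrow> T i * (T i + 1 - t) = t"
proof -
  assume i: "i \<in> {1..<n}"
  have "T i * (T i + 1 - t) = T i * T i + T i - T i * t" by (simp add: algebra_simps)
  also have "\<dots> = t" using quad[OF i] tcen[of "T i"] by (simp add: algebra_simps)
  finally show ?thesis .
qed

lemma cancel_T:
  assumes i: "i \<in> {1..<n}" and e: "A * T i = B * T i"
  shows "A = B"
proof -
  have "A = A * T i * (T i + 1 - t) * tinv" using Tbar_inv[OF i] tinv by (simp add: mult.assoc)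
  also have "\<dots> = B * T i * (T i + 1 - t) * tinv" using e by simp
  also have "\<dots> = B" using Tbar_inv[OF i] tinv by (simp add: mult.assoc)
  finally show ?thesis .
qed

lemma TX_bar:
  assumes i: "i \<in> {1..<n}"
  shows "T i * X i = X (Suc i) * (T i + 1 - t)"
proof (rule cancel_T[OF i])
  have "X (Suc i) * (T i + 1 - t) * T i = X (Suc i) * ((T i + 1 - t) * T i)" by (simp add: mult.assoc)
  also have "(T i + 1 - t) * T i = T i * (T i + 1 - t)" using tcen[of "T i"] by (simp add: algebra_simps)
  also have "\<dots> = t" by (rule Tbar_inv[OF i])
  finally have "X (Suc i) * (T i + 1 - t) * T i = t * X (Suc i)" using tcen by simp
  then show "T i * X i * T i = X (Suc i) * (T i + 1 - t) * T i" using TXT[OF i] by simp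
qed

lemma P_remove1:
  "x \<in> set xs \<Longrightarrow> set xs \<subseteq> {1..n} \<Longrightarrow> prod_list (map X xs) = X x * prod_list (map X (remove1 x xs))"
proof (induction xs)
  case Nil then show ?case by simp
next
  case (Cons y ys)
  show ?case
  proof (cases "y = x")
    case True then show ?thesis by simp
  next
    case False
    then have "prod_list (map X (y # ys)) = X y * (X x * prod_list (map X (remove1 x ys)))"
      using Cons by simp
    also have "\<dots> = X x * (X y * prod_list (map X (remove1 x ys)))"
    proof -
      have "x \<in> {1..n}" "y \<in> {1..n}" using Cons.prems by auto
      then have "X y * X x = X x * X y" using XX by blast
      then show ?thesis by (simp add: mult.assoc[symmetric])
    qed
    finally show ?thesis using False by simp
  qed
qed

lemma Xcol_remove:
  assumes "finite A" "A \<subseteq> {1..n}" "a \<in> A"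
  shows "Xcol X A = X a * Xcol X (A - {a})"
  unfolding Xcol_def using assms
  by (simp add: sorted_list_of_set_remove P_remove1)

lemma T_comm_P:
  "i \<in> {1..<n} \<Longrightarrow> set xs \<subseteq> {1..n} - {i, Suc i} \<Longrightarrow> T i * prod_list (map X xs) = prod_list (map X xs) * T i"
proof (induction xs)
  case Nil then show ?case by simp
next
  case (Cons y ys)
  have "T i * prod_list (map X (y # ys)) = (T i * X y) * prod_list (map X ys)" by (simp add: mult.assoc)
  also have "\<dots> = X y * (T i * prod_list (map X ys))" using TX[OF Cons.prems(1), of y] Cons.prems
    by (simp add: mult.assoc)
  also have "\<dots> = prod_list (map X (y # ys)) * T i" using Cons by (simp add: mult.assoc)
  finally show ?case .
qed

lemma T_comm_Xcol:
  "i \<in> {1..<n} \<Longrightarrow> finite A \<Longrightarrow> A \<subseteq> {1..n} - {i, Suc i} \<Longrightarrow> T i * Xcol X A = Xcol X A * T i"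
  unfolding Xcol_def by (rule T_comm_P) auto

lemma tinv_cen: "tinv * a = a * tinv"
proof -
  have "tinv * a = tinv * a * (t * tinv)" using tinv by simp
  also have "\<dots> = tinv * (a * t) * tinv" by (simp add: mult.assoc)
  also have "\<dots> = tinv * (t * a) * tinv" using tcen by simp
  also have "\<dots> = a * tinv" using tinv by (simp add: mult.assoc[symmetric])
  finally show ?thesis .
qed

lemma tinv_left: "a * (tinv * b) = tinv * (a * b)"
proof -
  have "a * (tinv * b) = (a * tinv) * b" by (simp add: mult.assoc)
  also have "\<dots> = (tinv * a) * b" by (simp only: tinv_cen)
  finally show ?thesis by (simp add: mult.assoc)
qed

lemma T_comm_XX:
  assumes i: "i \<in> {1..<n}"
  shows "T i * (X i * X (Suc i)) = (X i * X (Suc i)) * T i"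
proof -
  have x1: "X (Suc i) = tinv * (T i * X i * T i)" using TXT[OF i] tinv by (simp add: mult.assoc[symmetric])
  have key: "T i * X i * T i * X i = X i * T i * X i * T i"
  proof -
    have "T i * X i * T i * X i = t * (X (Suc i) * X i)" using TXT[OF i] by (simp add: mult.assoc)
    also have "\<dots> = t * (X i * X (Suc i))" using XX[of "Suc i" i] i by simp
    also have "\<dots> = X i * (t * X (Suc i))" using tcen[of "X i"] by (simp add: mult.assoc[symmetric])
    also have "\<dots> = X i * T i * X i * T i" using TXT[OF i] by (simp add: mult.assoc)
    finally show ?thesis .
  qed
  have "T i * (X i * X (Suc i)) = tinv * (T i * X i * T i * X i * T i)"
    unfolding x1 by (simp add: mult.assoc tinv_left)
  also have "\<dots> = tinv * (X i * T i * X i * T i * T i)" using key by simp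
  also have "\<dots> = (X i * X (Suc i)) * T i"
    unfolding x1 by (simp add: mult.assoc tinv_left)
  finally show ?thesis .
qed

lemma X1:
  assumes j: "j \<in> {1..<n}" and jl: "j \<noteq> l" and l: "l \<le> n"
  shows "T j * Xcol X {1..l} = Xcol X {1..l} * T j"
proof (cases "l < j")
  case True
  then show ?thesis using j l by (intro T_comm_Xcol) auto
next
  case False
  then have jl': "Suc j \<le> l" using jl by simp
  let ?R = "{1..l} - {j} - {Suc j}"
  have "Xcol X {1..l} = X j * Xcol X ({1..l} - {j})" using j jl' l by (intro Xcol_remove) auto
  also have "Xcol X ({1..l} - {j}) = X (Suc j) * Xcol X ?R" using j jl' l by (intro Xcol_remove) auto
  finally have e: "Xcol X {1..l} = (X j * X (Suc j)) * Xcol X ?R" by (simp add: mult.assoc)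
  have c: "T j * Xcol X ?R = Xcol X ?R * T j" using j l by (intro T_comm_Xcol) auto
  have "T j * Xcol X {1..l} = (T j * (X j * X (Suc j))) * Xcol X ?R" unfolding e by (simp add: mult.assoc)
  also have "\<dots> = (X j * X (Suc j)) * (T j * Xcol X ?R)" using T_comm_XX[OF j] by (simp add: mult.assoc)
  also have "\<dots> = Xcol X {1..l} * T j" unfolding e c by (simp add: mult.assoc)
  finally show ?thesis .
qed

lemma sref_image: "i \<in> A \<Longrightarrow> Suc i \<notin> A \<Longrightarrow> sref i ` A = insert (Suc i) (A - {i})"
  by (auto simp: sref_app image_iff)

lemma X2:
  assumes i: "i \<in> {1..<n}" and A: "finite A" "A \<subseteq> {1..n}" and iA: "i \<in> A" and siA: "Suc i \<notin> A"
  shows "T i * Xcol X A = Xcol X (sref i ` A) * (T i + 1 - t)"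
proof -
  let ?R = "A - {i}"
  have e1: "Xcol X A = X i * Xcol X ?R" by (rule Xcol_remove[OF A iA])
  have e2: "Xcol X (sref i ` A) = X (Suc i) * Xcol X ?R"
  proof -
    have "Xcol X (insert (Suc i) ?R) = X (Suc i) * Xcol X (insert (Suc i) ?R - {Suc i})"
      using A i by (intro Xcol_remove) auto
    moreover have "insert (Suc i) ?R - {Suc i} = ?R" using siA by auto
    ultimately show ?thesis using sref_image[OF iA siA] by simp
  qed
  have c: "T i * Xcol X ?R = Xcol X ?R * T i" using i A siA by (intro T_comm_Xcol) auto
  have c2: "(T i + 1 - t) * Xcol X ?R = Xcol X ?R * (T i + 1 - t)"
    using c tcen[of "Xcol X ?R"] by (simp add: algebra_simps)
  have "T i * Xcol X A = (T i * X i) * Xcol X ?R" unfolding e1 by (simp add: mult.assoc)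
  also have "\<dots> = X (Suc i) * ((T i + 1 - t) * Xcol X ?R)" unfolding TX_bar[OF i] by (simp add: mult.assoc)
  also have "\<dots> = Xcol X (sref i ` A) * (T i + 1 - t)" unfolding c2 e2 by (simp add: mult.assoc)
  finally show ?thesis .
qed

lemma X3:
  assumes l: "l \<le> n"
  shows "Xpow n X (varpi l) = Xcol X {1..l}"
proof -
  have s: "sorted_list_of_set {1..l} = [1..<Suc l]"
    by (metis atLeastLessThanSuc_atLeastAtMost sorted_list_of_set_range)
  have u: "[1..<Suc n] = [1..<Suc l] @ [Suc l..<Suc n]" using l
    by (metis Suc_le_mono le_add1 le_add_diff_inverse plus_1_eq_Suc upt_add_eq_append)
  have m1: "map (\<lambda>i. X i ^ nat (varpi l i)) [1..<Suc l] = map X [1..<Suc l]"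
    by (rule map_cong) (auto simp: varpi_def)
  have m2: "map (\<lambda>i. X i ^ nat (varpi l i)) [Suc l..<Suc n] = map (\<lambda>_. 1) [Suc l..<Suc n]"
    by (rule map_cong) (auto simp: varpi_def)
  have p1: "prod_list (map (\<lambda>_. 1::'a) xs) = 1" for xs :: "nat list" by (induction xs) auto
  show ?thesis unfolding Xpow_def Xcol_def s u by (simp only: map_append prod_list.append m1 m2 p1) simp
qed

lemma X4:
  assumes l: "l \<le> n"
  shows "reduced_word n v a \<Longrightarrow> G n l v \<Longrightarrow>
    prod_list (map T a) * Xcol X {1..l} = Xcol X (v ` {1..l}) * prod_list (map (\<lambda>j. T j + 1 - t) a)"
proof (induction a arbitrary: v)
  case Nil
  then have "v = id" by (simp add: reduced_word_def)
  then show ?case by simp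
next
  case (Cons j a)
  let ?v = "sref j \<circ> v"
  have g': "G n l ?v" and c1: "inv ?v j \<le> l" and c2: "l < inv ?v (Suc j)" and ra: "reduced_word n ?v a"
    using crossing[OF Cons.prems] by auto
  have IH: "prod_list (map T a) * Xcol X {1..l} = Xcol X (?v ` {1..l}) * prod_list (map (\<lambda>j. T j + 1 - t) a)"
    using Cons.IH[OF ra g'] .
  have vp: "?v permutes {1..n}" using perms_perm[OF reduced_perms[OF ra]] .
  have j: "j \<in> {1..<n}" using reduced_set[OF Cons.prems(1)] by auto
  let ?A = "?v ` {1..l}"
  have Af: "finite ?A" by simp
  have As: "?A \<subseteq> {1..n}"
  proof
    fix z assume "z \<in> ?A"
    then obtain x where "x \<in> {1..l}" "z = ?v x" by blast
    then show "z \<in> {1..n}" using l permutes_in_image[OF vp, of x] by auto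
  qed
  have jA: "j \<in> ?A"
  proof -
    have "inv ?v j \<in> {1..n}" using inv_in[OF vp] j by auto
    then have "inv ?v j \<in> {1..l}" using c1 by auto
    moreover have "?v (inv ?v j) = j" using permutes_inverses(1)[OF vp] by simp
    ultimately show ?thesis by (metis image_eqI)
  qed
  have sjA: "Suc j \<notin> ?A"
  proof
    assume "Suc j \<in> ?A"
    then obtain x where x: "x \<in> {1..l}" "?v x = Suc j" by (metis imageE)
    then have "inv ?v (Suc j) = x" using permutes_inverses(2)[OF vp] by metis
    then show False using x c2 by auto
  qed
  have img: "sref j ` ?A = v ` {1..l}" by (simp add: image_comp comp_assoc sref_def)
  have "prod_list (map T (j # a)) * Xcol X {1..l} = T j * (prod_list (map T a) * Xcol X {1..l})"
    by (simp add: mult.assoc)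
  also have "\<dots> = (T j * Xcol X ?A) * prod_list (map (\<lambda>j. T j + 1 - t) a)" unfolding IH by (simp add: mult.assoc)
  also have "\<dots> = Xcol X (v ` {1..l}) * prod_list (map (\<lambda>j. T j + 1 - t) (j # a))"
    unfolding X2[OF j Af As jA sjA] img by (simp add: mult.assoc)
  finally show ?case .
qed

lemma letters_stab:
  assumes l: "l \<in> {1..n}"
  shows "reduced_word n y a \<Longrightarrow> blk n l y \<Longrightarrow> l \<notin> set a"
proof (induction a arbitrary: y)
  case Nil then show ?case by simp
next
  case (Cons j a)
  have yp: "y \<in> perms n" using reduced_perms[OF Cons.prems(1)] .
  have j: "j \<in> {1..<n}" using reduced_set[OF Cons.prems(1)] by auto
  have d: "inv y (Suc j) < inv y j" by (rule descent_of_reduced[OF Cons.prems(1)])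
  have jl: "j \<noteq> l"
  proof
    assume jl: "j = l"
    have bi: "blk n l (inv y)" using blk_inv[OF yp Cons.prems(2)] .
    have "inv y l \<le> l" using bi l unfolding blk_def by auto
    moreover have "\<not> inv y (Suc l) \<le> l" using bi j jl unfolding blk_def by auto
    ultimately show False using d jl by simp
  qed
  have sl: "(sref j z \<le> l) = (z \<le> l)" for z
    using jl unfolding sref_app by (cases "z = j"; cases "z = Suc j") auto
  have b': "blk n l (sref j \<circ> y)"
    using Cons.prems(2) unfolding blk_def by (simp add: sl)
  have "l \<notin> set a" using Cons.IH[OF reduced_Cons_down(1)[OF Cons.prems(1)] b'] .
  then show ?case using jl by simp
qed

lemma P_comm:
  assumes l: "l \<in> {1..n}"
  shows "set a \<subseteq> {1..<n} - {l} \<Longrightarrow> prod_list (map T a) * Xcol X {1..l} = Xcol X {1..l} * prod_list (map T a)"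
proof (induction a)
  case Nil then show ?case by simp
next
  case (Cons j a)
  have c: "T j * Xcol X {1..l} = Xcol X {1..l} * T j" using Cons.prems l by (intro X1) auto
  have "prod_list (map T (j # a)) * Xcol X {1..l} = T j * (Xcol X {1..l} * prod_list (map T a))"
    using Cons by (simp add: mult.assoc)
  also have "\<dots> = Xcol X {1..l} * prod_list (map T (j # a))" using c by (simp add: mult.assoc[symmetric])
  finally show ?case .
qed

lemma ev_comm:
  assumes l: "l \<in> {1..n}" and g: "in_Hstab n (varpi l) g"
  shows "ev n t T g * Xcol X {1..l} = Xcol X {1..l} * ev n t T g"
  unfolding ev_def sum_distrib_left sum_distrib_right
proof (rule sum.cong[OF refl])
  fix w assume w: "w \<in> perms n"
  show "evp t (g w) * Tw n T w * Xcol X {1..l} = Xcol X {1..l} * (evp t (g w) * Tw n T w)"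
  proof (cases "g w = 0")
    case True then show ?thesis by simp
  next
    case False
    then have ws: "w \<in> stab n (varpi l)" using g by (simp add: in_Hstab_def)
    then have b: "blk n l w" using stab_varpi by auto
    have r: "reduced_word n w (rword n w)" by (rule rword_reduced[OF w])
    have "l \<notin> set (rword n w)" by (rule letters_stab[OF l r b])
    then have "set (rword n w) \<subseteq> {1..<n} - {l}" using reduced_set[OF r] by auto
    then have c: "Tw n T w * Xcol X {1..l} = Xcol X {1..l} * Tw n T w"
      unfolding Tw_def by (rule P_comm[OF l])
    have "evp t (g w) * Tw n T w * Xcol X {1..l} = evp t (g w) * (Xcol X {1..l} * Tw n T w)"
      using c by (simp add: mult.assoc)
    also have "\<dots> = Xcol X {1..l} * (evp t (g w) * Tw n T w)"
      using evp_central[OF tc[OF H], of "g w" "Xcol X {1..l}"] by (simp add: mult.assoc[symmetric])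
    finally show ?thesis .
  qed
qed

end

lemma dcand_sum:
  assumes supp: "\<And>w. w \<notin> perms n \<Longrightarrow> h w = 0" and l: "l \<le> n"
  shows "h = (\<lambda>w. \<Sum>F\<in>cols n l. lmulTw n (ucol n F) (dcand n l h F) w)"
proof (rule ext)
  fix w
  let ?c = "dcand n l h"
  have st: "in_Hstab n (varpi l) (?c F)" for F by (auto simp: in_Hstab_def dcand_def)
  have "(\<Sum>F\<in>cols n l. lmulTw n (ucol n F) (?c F) w)
      = (\<Sum>F\<in>cols n l. \<Sum>y\<in>stab n (varpi l). ?c F y * delta (ucol n F \<circ> y) w)"
    by (rule sum.cong[OF refl]) (simp add: lmulTw_stab[OF _ st])
  also have "\<dots> = (if w \<in> perms n then ?c (w ` {1..l}) (inv (ucol n (w ` {1..l})) \<circ> w) else 0)"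
    by (rule double_sum[OF l])
  also have "\<dots> = h w"
    using factor[OF _ l, of w] supp[of w] by (auto simp: dcand_def)
  finally show "h w = (\<Sum>F\<in>cols n l. lmulTw n (ucol n F) (?c F) w)" by simp
qed

lemma ev_sumF: "ev n t T (\<lambda>w. \<Sum>F\<in>A. f F w) = (\<Sum>F\<in>A. ev n t T (f F))"
  by (rule ev_sum)

context
  fixes n :: nat and t tinv :: "'a::ring_1" and T X Xinv :: "nat \<Rightarrow> 'a"
  assumes H: "hecke_rels n t tinv T X Xinv"
begin

lemma lemB:
  assumes supp: "\<And>w. w \<notin> perms n \<Longrightarrow> h w = 0" and l: "l \<in> {1..n}"
  shows "ev n t T h * Xcol X {1..l} = (\<Sum>C\<in>cols n l. Xcol X C * ev n t T (lmulTbarw n (ucol n C) (decomp n l h C)))"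
proof -
  have ln: "l \<le> n" using l by simp
  have d: "decomp n l h = dcand n l h" by (rule decomp_eq[OF supp ln])
  have "ev n t T h = (\<Sum>F\<in>cols n l. ev n t T (lmulTw n (ucol n F) (dcand n l h F)))"
  proof -
    have "ev n t T h = ev n t T (\<lambda>w. \<Sum>F\<in>cols n l. lmulTw n (ucol n F) (dcand n l h F) w)"
      by (rule arg_cong[where f = "ev n t T"]) (rule dcand_sum[OF supp ln])
    then show ?thesis by (simp only: ev_sum)
  qed
  also have "\<dots> = (\<Sum>F\<in>cols n l. Tw n T (ucol n F) * ev n t T (dcand n l h F))"
    by (rule sum.cong[OF refl]) (simp add: ev_lmulTw[OF H] u_perms)
  finally have e: "ev n t T h = \<dots>" .
  show ?thesis
    unfolding e sum_distrib_right d
  proof (rule sum.cong[OF refl])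
    fix C assume C: "C \<in> cols n l"
    interpret colsetup n l C by (rule colsetup.intro[OF C])
    have st: "in_Hstab n (varpi l) (dcand n l h C)" by (auto simp: in_Hstab_def dcand_def)
    have r: "reduced_word n (ucol n C) (rword n (ucol n C))" by (rule rword_reduced[OF u_perm])
    have x4: "Tw n T (ucol n C) * Xcol X {1..l} = Xcol X C * prod_list (map (\<lambda>j. T j + 1 - t) (rword n (ucol n C)))"
      unfolding Tw_def using X4[OF H ln r u_G] u_image_lo by simp
    have "Tw n T (ucol n C) * ev n t T (dcand n l h C) * Xcol X {1..l}
        = Tw n T (ucol n C) * (ev n t T (dcand n l h C) * Xcol X {1..l})" by (simp add: mult.assoc)
    also have "\<dots> = (Tw n T (ucol n C) * Xcol X {1..l}) * ev n t T (dcand n l h C)"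
      using ev_comm[OF H l st] by (simp add: mult.assoc)
    also have "\<dots> = Xcol X C * ev n t T (lmulTbarw n (ucol n C) (dcand n l h C))"
      unfolding x4 ev_lmulTbarw[OF H u_perm] by (simp add: mult.assoc)
    finally show "Tw n T (ucol n C) * ev n t T (dcand n l h C) * Xcol X {1..l}
        = Xcol X C * ev n t T (lmulTbarw n (ucol n C) (dcand n l h C))" .
  qed
qed

end


definition cnt :: "nat set \<Rightarrow> nat \<Rightarrow> nat" where
  "cnt A m = card {x \<in> A. x \<le> m}"

lemma sref_le: "m \<noteq> j \<Longrightarrow> (sref j x \<le> m) = (x \<le> m)"
  unfolding sref_app by (cases "x = j"; cases "x = Suc j") auto

lemma inj_sref: "inj (sref j)"
  unfolding sref_def by simp

lemma cnt_c1:
  assumes "m \<noteq> j"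
  shows "cnt (sref j ` A) m = cnt A m"
proof -
  have "{x \<in> sref j ` A. x \<le> m} = sref j ` {x \<in> A. x \<le> m}"
    using sref_le[OF assms] by auto
  then show ?thesis unfolding cnt_def using inj_sref
    by (simp add: card_image inj_on_subset[of _ UNIV])
qed

lemma cnt_c2:
  assumes j: "1 \<le> j" and f: "finite A"
  shows "cnt (sref j ` A) j = cnt A (j - 1) + (if Suc j \<in> A then 1 else 0)"
proof -
  have e: "{x \<in> sref j ` A. x \<le> j} = {x \<in> A. x \<le> j - 1} \<union> (if Suc j \<in> A then {j} else {})"
  proof (rule set_eqI)
    fix z
    show "z \<in> {x \<in> sref j ` A. x \<le> j} \<longleftrightarrow> z \<in> {x \<in> A. x \<le> j - 1} \<union> (if Suc j \<in> A then {j} else {})"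
    proof
      assume "z \<in> {x \<in> sref j ` A. x \<le> j}"
      then obtain x where x: "x \<in> A" "z = sref j x" "z \<le> j" by auto
      then show "z \<in> {x \<in> A. x \<le> j - 1} \<union> (if Suc j \<in> A then {j} else {})"
        using j by (auto simp: sref_app split: if_splits)
    next
      assume a: "z \<in> {x \<in> A. x \<le> j - 1} \<union> (if Suc j \<in> A then {j} else {})"
      show "z \<in> {x \<in> sref j ` A. x \<le> j}"
      proof (cases "z \<in> {x \<in> A. x \<le> j - 1}")
        case True
        then have "sref j z = z" using j by (auto simp: sref_app)
        then show ?thesis using True j by (auto intro: image_eqI[of z _ z])
      next
        case False
        then have "Suc j \<in> A" "z = j" using a by (auto split: if_splits)
        moreover have "sref j (Suc j) = j" by (simp add: sref_app)
        ultimately show ?thesis by (auto intro: image_eqI[of j _ "Suc j"])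
      qed
    qed
  qed
  have d: "{x \<in> A. x \<le> j - 1} \<inter> (if Suc j \<in> A then {j} else {}) = {}" using j by auto
  show ?thesis unfolding cnt_def e
    by (subst card_Un_disjoint) (use f d in auto)
qed

lemma cnt_c3:
  assumes j: "1 \<le> j" and f: "finite A"
  shows "cnt A j = cnt A (j - 1) + (if j \<in> A then 1 else 0)"
proof -
  have xj: "(x \<le> j) = (x \<le> j - 1 \<or> x = j)" for x using j by arith
  have e: "{x \<in> A. x \<le> j} = {x \<in> A. x \<le> j - 1} \<union> (if j \<in> A then {j} else {})"
    unfolding xj by auto
  have d: "{x \<in> A. x \<le> j - 1} \<inter> (if j \<in> A then {j} else {}) = {}" using j by auto
  show ?thesis unfolding cnt_def e
    by (subst card_Un_disjoint) (use f d in auto)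
qed

lemma cnt_mono_m: "finite A \<Longrightarrow> m \<le> m' \<Longrightarrow> cnt A m \<le> cnt A m'"
  unfolding cnt_def by (rule card_mono) auto

lemma cnt_mono_set: "finite B \<Longrightarrow> A \<subseteq> B \<Longrightarrow> cnt A m \<le> cnt B m"
  unfolding cnt_def by (rule card_mono) auto

lemma gale1:
  assumes j: "1 \<le> j" and fA: "finite A" and fB: "finite B" and jB: "j \<in> B" and sjB: "Suc j \<notin> B"
    and le: "\<forall>m. cnt B m \<le> cnt A m"
  shows "\<forall>m. cnt (sref j ` B) m \<le> cnt A m"
proof
  fix m
  show "cnt (sref j ` B) m \<le> cnt A m"
  proof (cases "m = j")
    case False then show ?thesis using cnt_c1[OF False] le by simp
  next
    case True
    have "cnt (sref j ` B) j = cnt B (j - 1)" using cnt_c2[OF j fB] sjB by simp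
    also have "\<dots> \<le> cnt A (j - 1)" using le by simp
    also have "\<dots> \<le> cnt A j" by (rule cnt_mono_m[OF fA]) simp
    finally show ?thesis using True by simp
  qed
qed

lemma gale2:
  assumes j: "1 \<le> j" and fA: "finite A" and fB: "finite B" and jB: "j \<in> B" and sjB: "Suc j \<notin> B"
    and le: "\<forall>m. cnt B m \<le> cnt A m"
  shows "\<forall>m. cnt (sref j ` B) m \<le> cnt (sref j ` A) m"
proof
  fix m
  show "cnt (sref j ` B) m \<le> cnt (sref j ` A) m"
  proof (cases "m = j")
    case False then show ?thesis using cnt_c1[OF False] le by simp
  next
    case True
    have "cnt (sref j ` B) j = cnt B (j - 1)" using cnt_c2[OF j fB] sjB by simp
    also have "\<dots> \<le> cnt A (j - 1)" using le by simp
    also have "\<dots> \<le> cnt (sref j ` A) j" using cnt_c2[OF j fA] by simp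
    finally show ?thesis using True by simp
  qed
qed

fun SW :: "nat list \<Rightarrow> (nat \<Rightarrow> nat) set" where
  "SW [] = {id}"
| "SW (j # a) = SW a \<union> (\<lambda>p. sref j \<circ> p) ` SW a"

lemma lmulTbar_nz: "lmulTbar n j h w \<noteq> 0 \<Longrightarrow> h w \<noteq> 0 \<or> h (sref j \<circ> w) \<noteq> 0"
  by (auto simp: lmulTbar_def lmulT_def split: if_splits)

lemma foldr_support:
  "foldr (lmulTbar n) a g w \<noteq> 0 \<Longrightarrow> \<exists>p\<in>SW a. \<exists>y. g y \<noteq> 0 \<and> w = p \<circ> y"
proof (induction a arbitrary: w)
  case Nil then show ?case by auto
next
  case (Cons j a)
  from lmulTbar_nz[OF Cons.prems[simplified]]
  show ?case
  proof
    assume "foldr (lmulTbar n) a g w \<noteq> 0"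
    then obtain p y where p: "p \<in> SW a" "g y \<noteq> 0" "w = p \<circ> y" using Cons.IH by blast
    have "p \<in> SW (j # a)" using p(1) by simp
    then show ?thesis using p(2,3) by blast
  next
    assume "foldr (lmulTbar n) a g (sref j \<circ> w) \<noteq> 0"
    then obtain p y where p: "p \<in> SW a" "g y \<noteq> 0" "sref j \<circ> w = p \<circ> y" using Cons.IH by blast
    then have w: "w = (sref j \<circ> p) \<circ> y" by (metis comp_assoc sref_sref)
    have "sref j \<circ> p \<in> SW (j # a)" using p(1) by simp
    then show ?thesis using p(2) w by blast
  qed
qed

lemma SW_gale:
  assumes d: "d \<le> n"
  shows "reduced_word n v a \<Longrightarrow> G n d v \<Longrightarrow> p \<in> SW a \<Longrightarrow> \<forall>m. cnt (v ` {1..d}) m \<le> cnt (p ` {1..d}) m"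
proof (induction a arbitrary: v p)
  case Nil
  then have "v = id" "p = id" by (auto simp: reduced_word_def)
  then show ?case by simp
next
  case (Cons j a)
  let ?v = "sref j \<circ> v"
  have g': "G n d ?v" and c1: "inv ?v j \<le> d" and c2: "d < inv ?v (Suc j)" and ra: "reduced_word n ?v a"
    using crossing[OF Cons.prems(1,2)] by auto
  have vp: "?v permutes {1..n}" using perms_perm[OF reduced_perms[OF ra]] .
  have j: "j \<in> {1..<n}" using reduced_set[OF Cons.prems(1)] by auto
  let ?B = "?v ` {1..d}"
  have jB: "j \<in> ?B"
  proof -
    have "inv ?v j \<in> {1..n}" using inv_in[OF vp] j by auto
    then have "inv ?v j \<in> {1..d}" using c1 by auto
    moreover have "?v (inv ?v j) = j" using permutes_inverses(1)[OF vp] by simp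
    ultimately show ?thesis by (metis image_eqI)
  qed
  have sjB: "Suc j \<notin> ?B"
  proof
    assume "Suc j \<in> ?B"
    then obtain x where x: "x \<in> {1..d}" "?v x = Suc j" by (metis imageE)
    then have "inv ?v (Suc j) = x" using permutes_inverses(2)[OF vp] by metis
    then show False using x c2 by auto
  qed
  have vB: "v ` {1..d} = sref j ` ?B" by (simp add: image_comp comp_assoc sref_def)
  have j1: "1 \<le> j" using j by simp
  from Cons.prems(3) consider (a) "p \<in> SW a" | (b) p' where "p' \<in> SW a" "p = sref j \<circ> p'" by auto
  then show ?case
  proof cases
    case a
    have "\<forall>m. cnt ?B m \<le> cnt (p ` {1..d}) m" using Cons.IH[OF ra g' a] .
    from gale1[OF j1 _ _ jB sjB this] show ?thesis unfolding vB by simp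
  next
    case b
    have "\<forall>m. cnt ?B m \<le> cnt (p' ` {1..d}) m" using Cons.IH[OF ra g' b(1)] .
    from gale2[OF j1 _ _ jB sjB this] show ?thesis unfolding vB b(2) by (simp add: image_comp)
  qed
qed

lemma entry_E1:
  assumes f: "finite A" and k: "1 \<le> k" "k \<le> card A"
  shows "k \<le> cnt A (entry A k)"
proof -
  let ?xs = "sorted_list_of_set A"
  have len: "length ?xs = card A" by simp
  have sw: "sorted_wrt (<) ?xs" by (rule strict_sorted_list_of_set)
  have sub: "set (take k ?xs) \<subseteq> {x \<in> A. x \<le> entry A k}"
  proof
    fix x assume "x \<in> set (take k ?xs)"
    then obtain i where i: "i < length (take k ?xs)" "take k ?xs ! i = x" by (metis in_set_conv_nth)
    then have ik: "i < k" "i < length ?xs" by auto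
    have xi: "x = ?xs ! i" using i by simp
    have "x \<in> A" using xi ik f by (metis nth_mem set_sorted_list_of_set)
    moreover have "?xs ! i \<le> ?xs ! (k - 1)"
    proof (cases "i = k - 1")
      case True then show ?thesis by simp
    next
      case False
      then have "i < k - 1" using ik by simp
      moreover have "k - 1 < length ?xs" using k len by simp
      ultimately show ?thesis using sorted_wrt_nth_less[OF sw] by fastforce
    qed
    ultimately show "x \<in> {x \<in> A. x \<le> entry A k}" using xi by (simp add: entry_def)
  qed
  have "card (set (take k ?xs)) = k"
    using k len by (simp add: distinct_card)
  then show ?thesis unfolding cnt_def using card_mono[OF _ sub] f by simp
qed

lemma entry_E2:
  assumes f: "finite A" and k: "1 \<le> k" "k \<le> card A" and c: "k \<le> cnt A m"
  shows "entry A k \<le> m"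
proof (rule ccontr)
  assume "\<not> entry A k \<le> m"
  let ?xs = "sorted_list_of_set A"
  have gt: "m < ?xs ! (k - 1)" using \<open>\<not> entry A k \<le> m\<close> by (simp add: entry_def)
  have len: "length ?xs = card A" by simp
  have sw: "sorted_wrt (<) ?xs" by (rule strict_sorted_list_of_set)
  have sub: "{x \<in> A. x \<le> m} \<subseteq> set (take (k - 1) ?xs)"
  proof
    fix x assume x: "x \<in> {x \<in> A. x \<le> m}"
    then have "x \<in> set ?xs" using f by simp
    then obtain i where i: "i < length ?xs" "?xs ! i = x" by (metis in_set_conv_nth)
    have "i < k - 1"
    proof (rule ccontr)
      assume "\<not> i < k - 1"
      then have "?xs ! (k - 1) \<le> ?xs ! i"
        using sorted_wrt_nth_less[OF sw, of "k - 1" i] i by (cases "i = k - 1") auto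
      then show False using gt x i by auto
    qed
    then show "x \<in> set (take (k - 1) ?xs)" using i by (metis in_set_conv_nth length_take min_less_iff_conj nth_take)
  qed
  have "card (set (take (k - 1) ?xs)) \<le> k - 1" by (metis card_length length_take min.boundedE order.refl)
  then have "cnt A m \<le> k - 1" unfolding cnt_def using card_mono[OF _ sub] by (meson List.finite_set le_trans)
  then show False using c k by simp
qed

lemma entry_cmp:
  assumes fC: "finite C" and fD: "finite D" and cd: "card D \<le> card C"
    and le: "\<forall>m. cnt D m \<le> cnt C m" and k: "k \<in> {1..card D}"
  shows "entry C k \<le> entry D k"
proof -
  have "k \<le> cnt D (entry D k)" using entry_E1[OF fD] k by auto
  also have "\<dots> \<le> cnt C (entry D k)" using le by simp
  finally show ?thesis using entry_E2[OF fC] k cd by auto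
qed


definition zs :: "nat \<Rightarrow> hn \<Rightarrow> bool" where
  "zs n h \<longleftrightarrow> (\<forall>w. w \<notin> perms n \<longrightarrow> h w = 0)"

definition okT :: "nat \<Rightarrow> nat set list \<Rightarrow> bool" where
  "okT n Ts \<longleftrightarrow> (\<forall>C\<in>set Ts. C \<subseteq> {1..n}) \<and> sorted_wrt (\<lambda>A B. card B \<le> card A) Ts"

lemma zs_lmulTbar: "zs n h \<Longrightarrow> zs n (lmulTbar n i h)"
  by (simp add: zs_def lmulTbar_def lmulT_def)

lemma zs_foldr: "zs n h \<Longrightarrow> zs n (foldr (lmulTbar n) a h)"
  by (induction a) (auto intro: zs_lmulTbar)

lemma zs_lmulTbarw: "zs n h \<Longrightarrow> zs n (lmulTbarw n u h)"
  unfolding lmulTbarw_def by (rule zs_foldr)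

lemma one_stab_H: "in_Hstab n lam (one_stab n lam)"
  by (simp add: in_Hstab_def one_stab_def)

lemma zs_Hstab: "in_Hstab n lam g \<Longrightarrow> zs n g"
  by (auto simp: in_Hstab_def zs_def stab_def)

lemma dcand_H: "in_Hstab n (varpi l) (dcand n l h F)"
  by (auto simp: in_Hstab_def dcand_def)

lemma card_le_n: "C \<subseteq> {1..n} \<Longrightarrow> card C \<le> n"
  using card_mono[of "{1..n}" C] by simp

lemma cols_of: "C \<subseteq> {1..n} \<Longrightarrow> C \<in> cols n (card C)"
  by (simp add: cols_def)

lemma Psi_zs: "\<forall>C\<in>set Ts. C \<subseteq> {1..n} \<Longrightarrow> zs n (Psi n Ts)"
proof (induction n Ts rule: Psi.induct)
  case (1 n) then show ?case by (simp add: zs_def one0_def)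
next
  case (2 n C) then show ?case using zs_lmulTbarw[OF zs_Hstab[OF one_stab_H]] by simp
next
  case (3 n C D S)
  have "zs n (Psi n (D # S))" using 3 by simp
  then have "decomp n (card C) (Psi n (D # S)) = dcand n (card C) (Psi n (D # S))"
    using 3 card_le_n by (intro decomp_eq) (auto simp: zs_def)
  then show ?case using zs_lmulTbarw[OF zs_Hstab[OF dcand_H]] by simp
qed

lemma Psi_form:
  assumes "\<forall>C\<in>set (D # S). C \<subseteq> {1..n}"
  shows "\<exists>g. in_Hstab n (varpi (card D)) g \<and> Psi n (D # S) = lmulTbarw n (ucol n D) g"
proof (cases S)
  case Nil then show ?thesis using one_stab_H by auto
next
  case (Cons E S')
  have "zs n (Psi n (E # S'))" using assms Cons by (intro Psi_zs) auto
  then have "decomp n (card D) (Psi n (E # S')) = dcand n (card D) (Psi n (E # S'))"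
    using assms card_le_n by (intro decomp_eq) (auto simp: zs_def)
  then show ?thesis using Cons dcand_H[of n "card D" "Psi n (E # S')" D] by auto
qed

lemma lmulT_zero: "lmulT n i (\<lambda>_. 0) = (\<lambda>_. 0)"
  by (rule ext) (simp add: lmulT_def)

lemma foldr_zero: "foldr (lmulTbar n) a (\<lambda>_. 0) = (\<lambda>_. 0)"
  by (induction a) (simp_all add: lmulTbar_def lmulT_zero)

lemma lmulTbarw_zero: "lmulTbarw n u (\<lambda>_. 0) = (\<lambda>_. 0)"
  unfolding lmulTbarw_def by (rule foldr_zero)

lemma semistandard_cons:
  "semistandard (C # D # S) \<longleftrightarrow> (\<forall>k\<in>{1..card D}. entry C k \<le> entry D k) \<and> semistandard (D # S)"
proof
  assume a: "semistandard (C # D # S)"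
  have "(\<forall>k\<in>{1..card D}. entry C k \<le> entry D k)" using a[unfolded semistandard_def, rule_format, of 0] by simp
  moreover have "semistandard (D # S)" unfolding semistandard_def
  proof (intro allI impI)
    fix j assume "Suc j < length (D # S)"
    then show "\<forall>k\<in>{1..card ((D # S) ! Suc j)}. entry ((D # S) ! j) k \<le> entry ((D # S) ! Suc j) k"
      using a[unfolded semistandard_def, rule_format, of "Suc j"] by simp
  qed
  ultimately show "(\<forall>k\<in>{1..card D}. entry C k \<le> entry D k) \<and> semistandard (D # S)" ..
next
  assume a: "(\<forall>k\<in>{1..card D}. entry C k \<le> entry D k) \<and> semistandard (D # S)"
  show "semistandard (C # D # S)" unfolding semistandard_def
  proof (intro allI impI)
    fix j assume j: "Suc j < length (C # D # S)"
    show "\<forall>k\<in>{1..card ((C # D # S) ! Suc j)}. entry ((C # D # S) ! j) k \<le> entry ((C # D # S) ! Suc j) k"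
    proof (cases j)
      case 0 then show ?thesis using a by simp
    next
      case (Suc j')
      then show ?thesis using a j unfolding semistandard_def by auto
    qed
  qed
qed

lemma semistandard_single: "semistandard [C]"
  by (simp add: semistandard_def)

lemma semistandard_nil: "semistandard []"
  by (simp add: semistandard_def)

lemma violation_zero:
  assumes cols: "\<forall>E\<in>set (C # D # S). E \<subseteq> {1..n}" and cd: "card D \<le> card C"
    and k: "k \<in> {1..card D}" and viol: "entry D k < entry C k"
    and y: "y \<in> stab n (varpi (card C))"
  shows "Psi n (D # S) (ucol n C \<circ> y) = 0"
proof (rule ccontr)
  assume nz: "Psi n (D # S) (ucol n C \<circ> y) \<noteq> 0"
  let ?l = "card C" and ?d = "card D"
  have Cs: "C \<subseteq> {1..n}" and Ds: "D \<subseteq> {1..n}" using cols by auto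
  have fC: "finite C" and fD: "finite D" using Cs Ds finite_subset by blast+
  have Cc: "C \<in> cols n ?l" and Dc: "D \<in> cols n ?d" using Cs Ds by (simp_all add: cols_of)
  have ln: "?l \<le> n" "?d \<le> n" using card_le_n Cs Ds by auto
  obtain g where g: "in_Hstab n (varpi ?d) g" and pf: "Psi n (D # S) = lmulTbarw n (ucol n D) g"
    using Psi_form[of D S n] cols by auto
  from nz pf have "foldr (lmulTbar n) (rword n (ucol n D)) g (ucol n C \<circ> y) \<noteq> 0"
    by (simp add: lmulTbarw_def)
  from foldr_support[OF this] obtain p z where p: "p \<in> SW (rword n (ucol n D))"
    and gz: "g z \<noteq> 0" and e: "ucol n C \<circ> y = p \<circ> z" by blast
  have zs: "z \<in> stab n (varpi ?d)" using g gz by (simp add: in_Hstab_def)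
  then have zp: "z \<in> perms n" and zb: "blk n ?d z" using stab_varpi by auto
  interpret D: colsetup n ?d D by (rule colsetup.intro[OF Dc])
  have r: "reduced_word n (ucol n D) (rword n (ucol n D))" by (rule rword_reduced[OF D.u_perm])
  have gale: "\<forall>m. cnt (ucol n D ` {1..?d}) m \<le> cnt (p ` {1..?d}) m"
    by (rule SW_gale[OF ln(2) r D.u_G p])
  have img: "ucol n D ` {1..?d} = D" by (rule D.u_image_lo)
  have Cimg: "C = (ucol n C \<circ> y) ` {1..?l}" using factor_image[OF Cc y] by simp
  have "p ` {1..?d} = p ` (z ` {1..?d})" using blk_image[OF zp zb ln(2)] by simp
  also have "\<dots> = (p \<circ> z) ` {1..?d}" by (simp add: image_comp)
  also have "\<dots> \<subseteq> (p \<circ> z) ` {1..?l}" using cd by auto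
  also have "\<dots> = C" using Cimg e by simp
  finally have sub: "p ` {1..?d} \<subseteq> C" .
  have le: "\<forall>m. cnt D m \<le> cnt C m"
  proof
    fix m
    have "cnt D m \<le> cnt (p ` {1..?d}) m" using gale img by metis
    also have "\<dots> \<le> cnt C m" by (rule cnt_mono_set[OF fC sub])
    finally show "cnt D m \<le> cnt C m" .
  qed
  have "entry C k \<le> entry D k" by (rule entry_cmp[OF fC fD cd le k])
  then show False using viol by simp
qed

lemma partA:
  "okT n Ts \<Longrightarrow> \<not> semistandard Ts \<Longrightarrow> Psi n Ts = (\<lambda>_. 0)"
proof (induction n Ts rule: Psi.induct)
  case (1 n) then show ?case by (simp add: semistandard_nil)
next
  case (2 n C) then show ?case by (simp add: semistandard_single)
next
  case (3 n C D S)
  have cols: "\<forall>E\<in>set (C # D # S). E \<subseteq> {1..n}" using 3 by (simp add: okT_def)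
  have cd: "card D \<le> card C" using 3 by (simp add: okT_def)
  have okt: "okT n (D # S)" using 3 by (simp add: okT_def)
  have zsP: "zs n (Psi n (D # S))" using cols by (intro Psi_zs) auto
  have ln: "card C \<le> n" using cols card_le_n by auto
  have dec: "decomp n (card C) (Psi n (D # S)) = dcand n (card C) (Psi n (D # S))"
    using zsP ln by (intro decomp_eq) (auto simp: zs_def)
  have "dcand n (card C) (Psi n (D # S)) C = (\<lambda>_. 0)"
  proof (cases "semistandard (D # S)")
    case False
    then have "Psi n (D # S) = (\<lambda>_. 0)" using 3 okt by simp
    then show ?thesis by (auto simp: dcand_def)
  next
    case True
    then obtain k where k: "k \<in> {1..card D}" and viol: "entry D k < entry C k"
      using 3(3) semistandard_cons by (meson not_le)
    show ?thesis
      by (rule ext) (auto simp: dcand_def violation_zero[OF cols cd k viol])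
  qed
  then show ?case using dec by (simp add: lmulTbarw_zero)
qed


lemma dcand_one0:
  assumes C: "C \<in> cols n l"
  shows "dcand n l (one0 n) C = one_stab n (varpi l)"
proof (rule ext)
  fix y
  show "dcand n l (one0 n) C y = one_stab n (varpi l) y"
    using comp_perms[OF u_perms[OF C] stab_perms, of y "varpi l"] C
    by (auto simp: dcand_def one0_def one_stab_def)
qed

context
  fixes n :: nat and t tinv :: "'a::ring_1" and T X Xinv :: "nat \<Rightarrow> 'a"
  assumes H: "hecke_rels n t tinv T X Xinv"
begin

lemma stepS:
  assumes cols: "\<forall>C\<in>set U. C \<subseteq> {1..n}" and l: "l \<in> {1..n}"
  shows "ev n t T (Psi n U) * Xcol X {1..l} = (\<Sum>C\<in>cols n l. Xcol X C * ev n t T (Psi n (C # U)))"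
proof -
  have ln: "l \<le> n" using l by simp
  have zsP: "zs n (Psi n U)" by (rule Psi_zs[OF cols])
  have B: "ev n t T (Psi n U) * Xcol X {1..l}
      = (\<Sum>C\<in>cols n l. Xcol X C * ev n t T (lmulTbarw n (ucol n C) (decomp n l (Psi n U) C)))"
    by (rule lemB[OF H _ l]) (use zsP in \<open>auto simp: zs_def\<close>)
  have dec: "decomp n l (Psi n U) = dcand n l (Psi n U)"
    by (rule decomp_eq[OF _ ln]) (use zsP in \<open>auto simp: zs_def\<close>)
  have "lmulTbarw n (ucol n C) (decomp n l (Psi n U) C) = Psi n (C # U)" if C: "C \<in> cols n l" for C
  proof (cases U)
    case Nil
    have "card C = l" using C by (simp add: cols_def)
    then show ?thesis using Nil dec dcand_one0[OF C] by simp
  next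
    case (Cons D S)
    have "card C = l" using C by (simp add: cols_def)
    then show ?thesis using Cons by simp
  qed
  then show ?thesis unfolding B by (intro sum.cong) auto
qed

lemma partB:
  assumes tab: "tableau n Ts" and l: "l \<in> {1..n}"
  shows "ev n t T (Psi n Ts) * Xpow n X (varpi l) = (\<Sum>C\<in>cols n l. Xcol X C * ev n t T (Psi n (C # Ts)))"
proof -
  have cols: "\<forall>C\<in>set Ts. C \<subseteq> {1..n}" using tab by (simp add: tableau_def)
  show ?thesis using stepS[OF cols l] X3[OF H, of l] l by simp
qed

end

lemma dom_mono:
  assumes d: "dominant n lam" and ij: "1 \<le> i" "i \<le> j" "j \<le> n"
  shows "lam j \<le> lam i"
  using ij
proof (induction j)
  case 0 then show ?case by simp
next
  case (Suc j)
  show ?case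
  proof (cases "i = Suc j")
    case True then show ?thesis by simp
  next
    case False
    then have "i \<le> j" using Suc by simp
    then have "lam j \<le> lam i" using Suc by simp
    moreover have "lam (Suc j) \<le> lam j" using d Suc.prems \<open>i \<le> j\<close> by (auto simp: dominant_def)
    ultimately show ?thesis by simp
  qed
qed

lemma down_closed:
  assumes S: "S \<subseteq> {1..n}" and cl: "\<And>i j. 1 \<le> i \<Longrightarrow> i \<le> j \<Longrightarrow> j \<in> S \<Longrightarrow> i \<in> S"
  shows "S = {1..card S}"
proof (cases "S = {}")
  case True then show ?thesis by simp
next
  case False
  have f: "finite S" using S finite_subset by blast
  let ?m = "Max S"
  have mS: "?m \<in> S" using Max_in[OF f False] .
  have "S = {1..?m}"
  proof
    show "S \<subseteq> {1..?m}" using S f by auto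
    show "{1..?m} \<subseteq> S" using cl mS by auto
  qed
  moreover have "card {1..?m} = ?m" by simp
  ultimately show ?thesis by metis
qed

definition cl :: "nat \<Rightarrow> (nat \<Rightarrow> int) \<Rightarrow> nat \<Rightarrow> nat" where
  "cl n lam j = card {i \<in> {1..n}. int (Suc j) \<le> lam i}"

lemma cl_set:
  assumes d: "dominant n lam"
  shows "{i \<in> {1..n}. int (Suc j) \<le> lam i} = {1..cl n lam j}"
  unfolding cl_def
  by (rule down_closed) (use dom_mono[OF d] in \<open>fastforce\<close>)+

lemma cl_le: "cl n lam j \<le> n"
  unfolding cl_def using card_le_n[of "{i \<in> {1..n}. int (Suc j) \<le> lam i}" n] by blast

lemma cl_anti: "j \<le> j' \<Longrightarrow> cl n lam j' \<le> cl n lam j"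
  unfolding cl_def by (rule card_mono) auto

definition lamdec :: "(nat \<Rightarrow> int) \<Rightarrow> nat \<Rightarrow> int" where
  "lamdec lam = (\<lambda>i. max (lam i - 1) 0)"

lemma cl_dec: "cl n (lamdec lam) j = cl n lam (Suc j)"
proof -
  have "{i \<in> {1..n}. int (Suc j) \<le> lamdec lam i} = {i \<in> {1..n}. int (Suc (Suc j)) \<le> lam i}"
    by (auto simp: lamdec_def)
  then show ?thesis by (simp add: cl_def)
qed

lemma dom_dec: "dominant n lam \<Longrightarrow> dominant n (lamdec lam)"
  unfolding dominant_def lamdec_def by auto

lemma Btab_alt: "Btab n lam = {Ts. length Ts = nat (lam 1) \<and> (\<forall>j<length Ts. Ts ! j \<in> cols n (cl n lam j)) \<and> semistandard Ts}"
  by (simp add: Btab_def cl_def)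

lemma Btab_okT:
  assumes "U \<in> Btab n lam"
  shows "okT n U"
proof -
  have c: "\<forall>j<length U. U ! j \<in> cols n (cl n lam j)" using assms by (simp add: Btab_alt)
  have "\<forall>C\<in>set U. C \<subseteq> {1..n}"
  proof
    fix C assume "C \<in> set U"
    then obtain i where "i < length U" "U ! i = C" by (metis in_set_conv_nth)
    then show "C \<subseteq> {1..n}" using c by (auto simp: cols_def)
  qed
  moreover have "sorted_wrt (\<lambda>A B. card B \<le> card A) U"
    unfolding sorted_wrt_iff_nth_less using c cl_anti by (auto simp: cols_def)
  ultimately show ?thesis by (simp add: okT_def)
qed

lemma finite_Btab: "finite (Btab n lam)"
proof -
  have "Btab n lam \<subseteq> {xs. set xs \<subseteq> Pow {1..n} \<and> length xs = nat (lam 1)}"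
  proof
    fix U assume U: "U \<in> Btab n lam"
    then have "okT n U" by (rule Btab_okT)
    then show "U \<in> {xs. set xs \<subseteq> Pow {1..n} \<and> length xs = nat (lam 1)}"
      using U by (auto simp: okT_def Btab_def)
  qed
  moreover have "finite {xs. set xs \<subseteq> Pow {1..n} \<and> length xs = nat (lam 1)}"
    by (rule finite_lists_length_eq) simp
  ultimately show ?thesis by (rule finite_subset)
qed

lemma Btab_step:
  assumes d: "dominant n lam" and N: "nat (lam 1) = Suc N" and n1: "1 \<le> n"
  shows "Btab n lam = (\<lambda>p. fst p # snd p) ` {p \<in> cols n (cl n lam 0) \<times> Btab n (lamdec lam). semistandard (fst p # snd p)}"
proof -
  have N': "nat (lamdec lam 1) = N" using N by (simp add: lamdec_def)
  show ?thesis
  proof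
    show "Btab n lam \<subseteq> (\<lambda>p. fst p # snd p) ` {p \<in> cols n (cl n lam 0) \<times> Btab n (lamdec lam). semistandard (fst p # snd p)}"
    proof
      fix U assume U: "U \<in> Btab n lam"
      then have len: "length U = Suc N" and c: "\<forall>j<length U. U ! j \<in> cols n (cl n lam j)" and ss: "semistandard U"
        using N by (auto simp: Btab_alt)
      obtain C U' where UC: "U = C # U'" using len by (cases U) auto
      have "C \<in> cols n (cl n lam 0)" using c UC by auto
      moreover have "U' \<in> Btab n (lamdec lam)"
      proof -
        have "length U' = nat (lamdec lam 1)" using len UC N' by simp
        moreover have "\<forall>j<length U'. U' ! j \<in> cols n (cl n (lamdec lam) j)"
          using c UC by (auto simp: cl_dec)
        moreover have "semistandard U'"
        proof (cases U')
          case Nil then show ?thesis by (simp add: semistandard_nil)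
        next
          case (Cons D S) then show ?thesis using ss UC semistandard_cons by simp
        qed
        ultimately show ?thesis by (simp add: Btab_alt)
      qed
      ultimately show "U \<in> (\<lambda>p. fst p # snd p) ` {p \<in> cols n (cl n lam 0) \<times> Btab n (lamdec lam). semistandard (fst p # snd p)}"
        using ss UC by (auto intro!: image_eqI[of _ _ "(C, U')"])
    qed
    show "(\<lambda>p. fst p # snd p) ` {p \<in> cols n (cl n lam 0) \<times> Btab n (lamdec lam). semistandard (fst p # snd p)} \<subseteq> Btab n lam"
    proof
      fix U assume "U \<in> (\<lambda>p. fst p # snd p) ` {p \<in> cols n (cl n lam 0) \<times> Btab n (lamdec lam). semistandard (fst p # snd p)}"
      then obtain C U' where C: "C \<in> cols n (cl n lam 0)" and U': "U' \<in> Btab n (lamdec lam)"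
        and ss: "semistandard (C # U')" and UC: "U = C # U'" by auto
      have "length U = nat (lam 1)" using U' UC N N' by (simp add: Btab_alt)
      moreover have "\<forall>j<length U. U ! j \<in> cols n (cl n lam j)"
      proof (intro allI impI)
        fix j assume "j < length U"
        then show "U ! j \<in> cols n (cl n lam j)"
          using C U' UC by (cases j) (auto simp: Btab_alt cl_dec)
      qed
      ultimately show "U \<in> Btab n lam" using ss UC by (simp add: Btab_alt)
    qed
  qed
qed

context
  fixes n :: nat and t tinv :: "'a::ring_1" and T X Xinv :: "nat \<Rightarrow> 'a"
  assumes H: "hecke_rels n t tinv T X Xinv"
begin

definition commX :: "'a \<Rightarrow> bool" where
  "commX a \<longleftrightarrow> (\<forall>k\<in>{1..n}. X k * a = a * X k)"

lemma commX_1: "commX 1" by (simp add: commX_def)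

lemma commX_mult: "commX a \<Longrightarrow> commX b \<Longrightarrow> commX (a * b)"
  unfolding commX_def by (metis mult.assoc)

lemma commX_X: "k \<in> {1..n} \<Longrightarrow> commX (X k)"
  using XX[OF H] by (auto simp: commX_def)

lemma commX_P: "set xs \<subseteq> {1..n} \<Longrightarrow> commX (prod_list (map X xs))"
proof (induction xs)
  case Nil then show ?case by (simp add: commX_1)
next
  case (Cons x xs)
  then show ?case using commX_mult[OF commX_X] by simp
qed

lemma commX_Xcol: "C \<subseteq> {1..n} \<Longrightarrow> commX (Xcol X C)"
  unfolding Xcol_def
  by (rule commX_P) (metis finite_atLeastAtMost infinite_super set_sorted_list_of_set order_refl)

lemma commX_Xtab: "\<forall>C\<in>set U. C \<subseteq> {1..n} \<Longrightarrow> commX (Xtab X U)"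
  unfolding Xtab_def
proof (induction U)
  case Nil then show ?case by (simp add: commX_1)
next
  case (Cons C U)
  then show ?case using commX_mult[OF commX_Xcol] by simp
qed

lemma commX_comm_P: "commX a \<Longrightarrow> set xs \<subseteq> {1..n} \<Longrightarrow> prod_list (map X xs) * a = a * prod_list (map X xs)"
proof (induction xs)
  case Nil then show ?case by simp
next
  case (Cons x xs)
  have "prod_list (map X (x # xs)) * a = X x * (prod_list (map X xs) * a)" by (simp add: mult.assoc)
  also have "\<dots> = (X x * a) * prod_list (map X xs)" using Cons by (simp add: mult.assoc)
  also have "\<dots> = a * prod_list (map X (x # xs))" using Cons.prems unfolding commX_def by (simp add: mult.assoc)
  finally show ?case .
qed

lemma set_sl: "C \<subseteq> {1..n} \<Longrightarrow> set (sorted_list_of_set C) \<subseteq> {1..n}"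
proof -
  assume C: "C \<subseteq> {1..n}"
  then have "finite C" using finite_subset by blast
  then show ?thesis using C by simp
qed

lemma Xcol_comm: "commX a \<Longrightarrow> C \<subseteq> {1..n} \<Longrightarrow> Xcol X C * a = a * Xcol X C"
  unfolding Xcol_def by (erule commX_comm_P, erule set_sl)

lemma Xpow_dec:
  assumes d: "dominant n lam" and N: "1 \<le> lam 1" and n1: "1 \<le> n"
  shows "Xpow n X lam = Xpow n X (lamdec lam) * Xcol X {1..cl n lam 0}"
proof -
  let ?l = "cl n lam 0"
  have ln: "?l \<le> n" by (rule cl_le)
  have cs: "{i \<in> {1..n}. int (Suc 0) \<le> lam i} = {1..?l}" by (rule cl_set[OF d])
  have split: "X i ^ nat (lam i) = X i ^ nat (lamdec lam i) * X i ^ nat (varpi ?l i)" if i: "i \<in> {1..n}" for i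
  proof -
    have mem: "(i \<in> {i \<in> {1..n}. int (Suc 0) \<le> lam i}) = (i \<in> {1..?l})" by (simp only: cs)
    then have iff: "(1 \<le> lam i) = (i \<le> ?l)" using i by simp
    have l0: "0 \<le> lam i" using d i by (simp add: dominant_def)
    have "nat (lam i) = nat (lamdec lam i) + nat (varpi ?l i)"
      using iff l0 by (cases "1 \<le> lam i") (simp_all add: lamdec_def varpi_def)
    then show ?thesis by (simp add: power_add)
  qed
  have pc: "X i ^ a * X j ^ b = X j ^ b * X i ^ a" if "i \<in> {1..n}" "j \<in> {1..n}" for i j a b
  proof -
    have c1: "X i * X j ^ b = X j ^ b * X i" for b
    proof (induction b)
      case 0 then show ?case by simp
    next
      case (Suc b)
      have "X i * X j ^ Suc b = (X i * X j) * X j ^ b" by (simp add: mult.assoc)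
      also have "\<dots> = X j * (X i * X j ^ b)" using XX[OF H that] by (simp add: mult.assoc)
      also have "\<dots> = X j ^ Suc b * X i" using Suc by (simp add: mult.assoc)
      finally show ?case .
    qed
    show ?thesis
    proof (induction a)
      case 0 then show ?case by simp
    next
      case (Suc a)
      have "X i ^ Suc a * X j ^ b = X i * (X i ^ a * X j ^ b)" by (simp add: mult.assoc)
      also have "\<dots> = (X i * X j ^ b) * X i ^ a" using Suc by (simp add: mult.assoc)
      also have "\<dots> = X j ^ b * X i ^ Suc a" using c1 by (simp add: mult.assoc power_Suc)
      finally show ?case .
    qed
  qed
  have gen: "set xs \<subseteq> {1..n} \<Longrightarrow> prod_list (map (\<lambda>i. X i ^ nat (lamdec lam i) * X i ^ nat (varpi ?l i)) xs)
      = prod_list (map (\<lambda>i. X i ^ nat (lamdec lam i)) xs) * prod_list (map (\<lambda>i. X i ^ nat (varpi ?l i)) xs)" for xs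
  proof (induction xs)
    case Nil then show ?case by simp
  next
    case (Cons x xs)
    have xn: "x \<in> {1..n}" and xs: "set xs \<subseteq> {1..n}" using Cons.prems by auto
    let ?F = "prod_list (map (\<lambda>i. X i ^ nat (lamdec lam i)) xs)"
    let ?G = "prod_list (map (\<lambda>i. X i ^ nat (varpi ?l i)) xs)"
    have cF: "X x ^ b * prod_list (map (\<lambda>i. X i ^ nat (lamdec lam i)) ys) = prod_list (map (\<lambda>i. X i ^ nat (lamdec lam i)) ys) * X x ^ b"
      if "set ys \<subseteq> {1..n}" for ys b
      using that
    proof (induction ys)
      case Nil then show ?case by simp
    next
      case (Cons y ys)
      have "X x ^ b * prod_list (map (\<lambda>i. X i ^ nat (lamdec lam i)) (y # ys))
          = (X x ^ b * X y ^ nat (lamdec lam y)) * prod_list (map (\<lambda>i. X i ^ nat (lamdec lam i)) ys)"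
        by (simp add: mult.assoc)
      also have "\<dots> = X y ^ nat (lamdec lam y) * (X x ^ b * prod_list (map (\<lambda>i. X i ^ nat (lamdec lam i)) ys))"
        using pc[of x y b] xn Cons.prems by (simp add: mult.assoc)
      also have "\<dots> = prod_list (map (\<lambda>i. X i ^ nat (lamdec lam i)) (y # ys)) * X x ^ b"
        using Cons by (simp add: mult.assoc)
      finally show ?case .
    qed
    have "prod_list (map (\<lambda>i. X i ^ nat (lamdec lam i) * X i ^ nat (varpi ?l i)) (x # xs))
        = X x ^ nat (lamdec lam x) * (X x ^ nat (varpi ?l x) * (?F * ?G))"
      using Cons xs by (simp add: mult.assoc)
    also have "X x ^ nat (varpi ?l x) * (?F * ?G) = ?F * (X x ^ nat (varpi ?l x) * ?G)"
      using cF[OF xs] by (simp add: mult.assoc[symmetric])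
    finally show ?case by (simp add: mult.assoc)
  qed
  have "Xpow n X lam = prod_list (map (\<lambda>i. X i ^ nat (lamdec lam i) * X i ^ nat (varpi ?l i)) [1..<Suc n])"
    unfolding Xpow_def by (rule arg_cong[where f = prod_list], rule map_cong) (auto simp: split)
  also have "\<dots> = Xpow n X (lamdec lam) * Xpow n X (varpi ?l)"
    unfolding Xpow_def by (rule gen) auto
  also have "Xpow n X (varpi ?l) = Xcol X {1..?l}" by (rule X3[OF H ln])
  finally show ?thesis .
qed

end

lemma okT_cons:
  assumes C: "C \<in> cols n (cl n lam 0)" and U: "U \<in> Btab n (lamdec lam)"
  shows "okT n (C # U)"
proof -
  have ok: "okT n U" by (rule Btab_okT[OF U])
  have c: "\<forall>j<length U. U ! j \<in> cols n (cl n (lamdec lam) j)" using U by (simp add: Btab_alt)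
  have "\<forall>y\<in>set U. card y \<le> card C"
  proof
    fix y assume "y \<in> set U"
    then obtain j where j: "j < length U" "U ! j = y" by (metis in_set_conv_nth)
    then have "card y = cl n lam (Suc j)" using c by (auto simp: cols_def cl_dec)
    also have "\<dots> \<le> cl n lam 0" by (rule cl_anti) simp
    also have "\<dots> = card C" using C by (simp add: cols_def)
    finally show "card y \<le> card C" .
  qed
  then show ?thesis using ok C by (auto simp: okT_def cols_def)
qed

context
  fixes n :: nat and t tinv :: "'a::ring_1" and T X Xinv :: "nat \<Rightarrow> 'a"
  assumes H: "hecke_rels n t tinv T X Xinv"
begin

lemma ev_one0: "ev n t T (one0 n) = (\<Sum>w\<in>perms n. Tw n T w)"
  by (simp add: ev_def one0_def)

lemma partC:
  assumes n1: "1 \<le> n"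
  shows "dominant n lam \<Longrightarrow> ev n t T (one0 n) * Xpow n X lam = (\<Sum>U\<in>Btab n lam. Xtab X U * ev n t T (Psi n U))"
proof (induction "nat (lam 1)" arbitrary: lam)
  case 0
  have z: "lam i = 0" if i: "i \<in> {1..n}" for i
  proof -
    have "lam i \<le> lam 1" using dom_mono[OF 0(2), of 1 i] i by auto
    moreover have "0 \<le> lam i" using 0(2) i by (simp add: dominant_def)
    moreover have "lam 1 \<le> 0" using 0(1) by simp
    ultimately show ?thesis by simp
  qed
  have xp: "Xpow n X lam = 1"
  proof -
    have m: "map (\<lambda>i. X i ^ nat (lam i)) [1..<Suc n] = map (\<lambda>_. 1) [1..<Suc n]"
      by (rule map_cong) (auto simp: z)
    have p1: "prod_list (map (\<lambda>_. 1::'a) xs) = 1" for xs :: "nat list" by (induction xs) auto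
    show ?thesis unfolding Xpow_def by (simp only: m p1)
  qed
  have bt: "Btab n lam = {[]}"
    using 0(1) by (auto simp: Btab_def semistandard_nil)
  show ?case unfolding xp bt by (simp add: Xtab_def)
next
  case (Suc N)
  let ?l = "cl n lam 0"
  let ?lam' = "lamdec lam"
  have d: "dominant n lam" by (rule Suc.prems)
  have N': "N = nat (?lam' 1)" using Suc.hyps(2) by (simp add: lamdec_def)
  have IH: "ev n t T (one0 n) * Xpow n X ?lam' = (\<Sum>U\<in>Btab n ?lam'. Xtab X U * ev n t T (Psi n U))"
    using Suc.hyps(1)[OF N' dom_dec[OF d]] .
  have l1: "1 \<le> lam 1" using Suc.hyps(2) by simp
  have cs: "{i \<in> {1..n}. int (Suc 0) \<le> lam i} = {1..?l}" by (rule cl_set[OF d])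
  have "1 \<in> {i \<in> {1..n}. int (Suc 0) \<le> lam i}" using l1 n1 by simp
  then have "1 \<in> {1..?l}" unfolding cs .
  then have lpos: "1 \<le> ?l" by simp
  have lrange: "?l \<in> {1..n}" using lpos cl_le[of n lam 0] by simp
  let ?F = "\<lambda>U. Xtab X U * ev n t T (Psi n U)"
  have "ev n t T (one0 n) * Xpow n X lam = (ev n t T (one0 n) * Xpow n X ?lam') * Xcol X {1..?l}"
    using Xpow_dec[OF H d l1 n1] by (simp add: mult.assoc)
  also have "\<dots> = (\<Sum>U\<in>Btab n ?lam'. Xtab X U * (ev n t T (Psi n U) * Xcol X {1..?l}))"
    unfolding IH sum_distrib_right by (simp add: mult.assoc)
  also have "\<dots> = (\<Sum>U\<in>Btab n ?lam'. \<Sum>C\<in>cols n ?l. ?F (C # U))"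
  proof (rule sum.cong[OF refl])
    fix U assume U: "U \<in> Btab n ?lam'"
    have colsU: "\<forall>C\<in>set U. C \<subseteq> {1..n}" using Btab_okT[OF U] by (simp add: okT_def)
    have "Xtab X U * (ev n t T (Psi n U) * Xcol X {1..?l})
        = (\<Sum>C\<in>cols n ?l. Xtab X U * Xcol X C * ev n t T (Psi n (C # U)))"
      unfolding stepS[OF H colsU lrange] sum_distrib_left by (simp add: mult.assoc)
    also have "\<dots> = (\<Sum>C\<in>cols n ?l. ?F (C # U))"
    proof (rule sum.cong[OF refl])
      fix C assume C: "C \<in> cols n ?l"
      have "Xcol X C * Xtab X U = Xtab X U * Xcol X C"
        using Xcol_comm[OF H commX_Xtab[OF H colsU]] C by (simp add: cols_def)
      then show "Xtab X U * Xcol X C * ev n t T (Psi n (C # U)) = ?F (C # U)"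
        by (simp add: Xtab_def)
    qed
    finally show "Xtab X U * (ev n t T (Psi n U) * Xcol X {1..?l}) = (\<Sum>C\<in>cols n ?l. ?F (C # U))" .
  qed
  also have "\<dots> = (\<Sum>p\<in>cols n ?l \<times> Btab n ?lam'. ?F (fst p # snd p))"
    by (subst sum.swap) (simp add: sum.cartesian_product split_beta)
  also have "\<dots> = (\<Sum>p\<in>{p \<in> cols n ?l \<times> Btab n ?lam'. semistandard (fst p # snd p)}. ?F (fst p # snd p))"
  proof (rule sum.mono_neutral_right)
    show "finite (cols n ?l \<times> Btab n ?lam')" by (simp add: finite_Btab)
    show "{p \<in> cols n ?l \<times> Btab n ?lam'. semistandard (fst p # snd p)} \<subseteq> cols n ?l \<times> Btab n ?lam'" by auto
    show "\<forall>p\<in>cols n ?l \<times> Btab n ?lam' - {p \<in> cols n ?l \<times> Btab n ?lam'. semistandard (fst p # snd p)}. ?F (fst p # snd p) = 0"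
    proof
      fix p assume p: "p \<in> cols n ?l \<times> Btab n ?lam' - {p \<in> cols n ?l \<times> Btab n ?lam'. semistandard (fst p # snd p)}"
      then have ok: "okT n (fst p # snd p)" using okT_cons by auto
      have "\<not> semistandard (fst p # snd p)" using p by auto
      then have "Psi n (fst p # snd p) = (\<lambda>_. 0)" using partA[OF ok] by simp
      then show "?F (fst p # snd p) = 0" by simp
    qed
  qed
  also have "\<dots> = (\<Sum>U\<in>Btab n lam. ?F U)"
  proof -
    have inj: "inj_on (\<lambda>p. fst p # snd p) {p \<in> cols n ?l \<times> Btab n ?lam'. semistandard (fst p # snd p)}"
      by (auto simp: inj_on_def prod_eq_iff)
    show ?thesis unfolding Btab_step[OF d Suc.hyps(2)[symmetric] n1]
      by (rule sum.reindex[OF inj, symmetric, unfolded comp_def])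
  qed
  finally show ?case .
qed

end

theorem theorem5p2:
  fixes n :: nat and Ts :: "nat set list"
    and t tinv :: "'a::ring_1" and T X Xinv :: "nat \<Rightarrow> 'a"
  assumes "1 \<le> n"
    and "tableau n Ts"
    and "hecke_rels n t tinv T X Xinv"
  shows "(\<not> semistandard Ts \<longrightarrow> Psi n Ts = (\<lambda>_. 0))
    \<and> (\<forall>l\<in>{1..n}. card (hd Ts) \<le> l \<longrightarrow>
          ev n t T (Psi n Ts) * Xpow n X (varpi l)
            = (\<Sum>C\<in>cols n l. Xcol X C * ev n t T (Psi n (C # Ts))))
    \<and> (\<forall>lam. dominant n lam \<longrightarrow>
          (\<Sum>w\<in>perms n. Tw n T w) * Xpow n X lam
            = (\<Sum>U\<in>Btab n lam. Xtab X U * ev n t T (Psi n U)))"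
proof (intro conjI impI ballI allI)
  have ok: "okT n Ts" using assms(2) by (simp add: tableau_def okT_def)
  show "\<not> semistandard Ts \<Longrightarrow> Psi n Ts = (\<lambda>_. 0)" by (rule partA[OF ok])
  show "ev n t T (Psi n Ts) * Xpow n X (varpi l) = (\<Sum>C\<in>cols n l. Xcol X C * ev n t T (Psi n (C # Ts)))"
    if "l \<in> {1..n}" for l
    by (rule partB[OF assms(3) assms(2) that])
  show "(\<Sum>w\<in>perms n. Tw n T w) * Xpow n X lam = (\<Sum>U\<in>Btab n lam. Xtab X U * ev n t T (Psi n U))"
    if "dominant n lam" for lam
    using partC[OF assms(3) assms(1) that] ev_one0[OF assms(3)] by simp
qed


end
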